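(* Let $A_1,\dots,A_m\in\mathbb{C}^{n\times n}$ be Hermitian matrices and fix $t\ge1$. (a) The map sending an ordered $*$-simultaneous block decomposition $(V_1,\dots,V_t)$ of $A_1,\dots,A_m$ to $(\epsilon_1,\dots,\epsilon_t)$, with $\epsilon_j$ the projection of $\mathbb{C}^n$ onto $V_j$ along $\bigoplus_{l\ne j}V_l$, is a bijection onto the set of ordered complete sets of $t$ orthogonal idempotents of $Z(A_1,\dots,A_m)$. In particular, there exist $P\in\mathrm{GL}_n(\mathbb{C})$ and positive integers $n_1,\dots,n_t$ summing to $n$ such that each $P^*A_iP$ is block diagonal with blocks of sizes $n_1,\dots,n_t$ if and only if $Z(A_1,\dots,A_m)$ contains a complete set of $t$ orthogonal idempotents. (b) Restricting (a) to decompositions whose subspaces $V_j$ are pairwise orthogonal for the standard Hermitian inner product, the same map (now $\epsilon_j$ is the orthogonal projection onto $V_j$) is a bijection onto the ordered complete sets of $t$ orthogonal idempotents of $Z(A_1,\dots,A_m)$ consisting of Hermitian matrices; in particular a unitary $U$ with every $U^*A_iU$ block diagonal with $t$ blocks exists if and only if $Z(A_1,\dots,A_m)$ contains a complete set of $t$ orthogonal idempotents that are Hermitian matrices.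
   Context: For Hermitian $A_1,\dots,A_m\in\mathbb{C}^{n\times n}$, the center is $Z(A_1,\dots,A_m)=\{X\in\mathbb{C}^{n\times n} : (A_iX)^*=A_iX \text{ for all } i\}$, where $^*$ denotes conjugate transpose. An ordered $*$-simultaneous block decomposition of length $t$ is a $t$-tuple $(V_1,\dots,V_t)$ of nonzero subspaces of $\mathbb{C}^n$ with $\mathbb{C}^n=V_1\oplus\cdots\oplus V_t$ and $x^*A_iy=0$ for all $i$, all $j\neq l$, $x\in V_j$, $y\in V_l$. An ordered complete set of $t$ orthogonal idempotents of the center is a $t$-tuple of nonzero matrices $\epsilon_1,\dots,\epsilon_t\in Z(A_1,\dots,A_m)$ with $\epsilon_j^2=\epsilon_j$, $\epsilon_j\epsilon_l=0$ for $j\neq l$, and $\sum_j\epsilon_j=I_n$. *)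

theory Defs
  imports "Jordan_Normal_Form.Matrix"
begin

text \<open>All matrices are n x n complex matrices (Jordan_Normal_Form 'complex mat' with
  carrier_mat n n); vectors are elements of carrier_vec n.  Ordered t-tuples are
  represented as lists of length t.\<close>

definition cadj :: "complex mat \<Rightarrow> complex mat" where
  "cadj A = transpose_mat (map_mat cnj A)"

definition hermitian_mat :: "nat \<Rightarrow> complex mat \<Rightarrow> bool" where
  "hermitian_mat n A \<longleftrightarrow> A \<in> carrier_mat n n \<and> cadj A = A"

definition unitary_mat :: "nat \<Rightarrow> complex mat \<Rightarrow> bool" where
  "unitary_mat n U \<longleftrightarrow> U \<in> carrier_mat n n \<and> cadj U * U = 1\<^sub>m n"

definition hform :: "complex mat \<Rightarrow> complex vec \<Rightarrow> complex vec \<Rightarrow> complex" where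
  "hform A x y = map_vec cnj x \<bullet> (A *\<^sub>v y)"

definition hinner :: "complex vec \<Rightarrow> complex vec \<Rightarrow> complex" where
  "hinner x y = map_vec cnj x \<bullet> y"

definition center :: "nat \<Rightarrow> complex mat list \<Rightarrow> complex mat set" where
  "center n As = {X \<in> carrier_mat n n. \<forall>A \<in> set As. cadj (A * X) = A * X}"

definition msum :: "nat \<Rightarrow> complex mat list \<Rightarrow> complex mat" where
  "msum n es = foldr (+) es (0\<^sub>m n n)"

definition vsum :: "nat \<Rightarrow> complex vec list \<Rightarrow> complex vec" where
  "vsum n ws = foldr (+) ws (0\<^sub>v n)"

definition orth_idempotents :: "nat \<Rightarrow> complex mat list \<Rightarrow> nat \<Rightarrow> complex mat list \<Rightarrow> bool" where
  "orth_idempotents n As t es \<longleftrightarrow>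
     length es = t \<and>
     (\<forall>j<t. es ! j \<in> center n As \<and> es ! j \<noteq> 0\<^sub>m n n \<and> es ! j * es ! j = es ! j) \<and>
     (\<forall>j<t. \<forall>l<t. j \<noteq> l \<longrightarrow> es ! j * es ! l = 0\<^sub>m n n) \<and>
     msum n es = 1\<^sub>m n"

definition csubspace :: "nat \<Rightarrow> complex vec set \<Rightarrow> bool" where
  "csubspace n V \<longleftrightarrow> V \<subseteq> carrier_vec n \<and> 0\<^sub>v n \<in> V \<and>
     (\<forall>x\<in>V. \<forall>y\<in>V. x + y \<in> V) \<and> (\<forall>c. \<forall>x\<in>V. c \<cdot>\<^sub>v x \<in> V)"

definition direct_sum_decomp :: "nat \<Rightarrow> complex vec set list \<Rightarrow> bool" where
  "direct_sum_decomp n Vs \<longleftrightarrow>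
     (\<forall>j<length Vs. csubspace n (Vs ! j)) \<and>
     (\<forall>v \<in> carrier_vec n. \<exists>!ws. length ws = length Vs \<and>
         (\<forall>j<length Vs. ws ! j \<in> Vs ! j) \<and> vsum n ws = v)"

definition star_block_decomp :: "nat \<Rightarrow> complex mat list \<Rightarrow> nat \<Rightarrow> complex vec set list \<Rightarrow> bool" where
  "star_block_decomp n As t Vs \<longleftrightarrow>
     length Vs = t \<and> direct_sum_decomp n Vs \<and>
     (\<forall>j<t. Vs ! j \<noteq> {0\<^sub>v n}) \<and>
     (\<forall>A \<in> set As. \<forall>j<t. \<forall>l<t. j \<noteq> l \<longrightarrow>
        (\<forall>x \<in> Vs ! j. \<forall>y \<in> Vs ! l. hform A x y = 0))"

definition pairwise_orth :: "complex vec set list \<Rightarrow> bool" where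
  "pairwise_orth Vs \<longleftrightarrow> (\<forall>j<length Vs. \<forall>l<length Vs. j \<noteq> l \<longrightarrow>
     (\<forall>x \<in> Vs ! j. \<forall>y \<in> Vs ! l. hinner x y = 0))"

definition proj_along :: "nat \<Rightarrow> complex vec set list \<Rightarrow> nat \<Rightarrow> complex mat" where
  "proj_along n Vs j = (THE E. E \<in> carrier_mat n n \<and>
     (\<forall>v \<in> Vs ! j. E *\<^sub>v v = v) \<and>
     (\<forall>l<length Vs. l \<noteq> j \<longrightarrow> (\<forall>v \<in> Vs ! l. E *\<^sub>v v = 0\<^sub>v n)))"

definition proj_map :: "nat \<Rightarrow> complex vec set list \<Rightarrow> complex mat list" where
  "proj_map n Vs = map (proj_along n Vs) [0..<length Vs]"

text \<open>Block diagonality with consecutive diagonal blocks of sizes ns!0, ..., ns!(t-1):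
  block j occupies the indices sum(take j ns) .. sum(take (j+1) ns) - 1.\<close>
definition in_block :: "nat list \<Rightarrow> nat \<Rightarrow> nat \<Rightarrow> bool" where
  "in_block ns j i \<longleftrightarrow> sum_list (take j ns) \<le> i \<and> i < sum_list (take (Suc j) ns)"

definition block_diag :: "nat \<Rightarrow> nat list \<Rightarrow> complex mat \<Rightarrow> bool" where
  "block_diag n ns M \<longleftrightarrow> M \<in> carrier_mat n n \<and>
     (\<forall>i<n. \<forall>k<n. (\<not> (\<exists>j<length ns. in_block ns j i \<and> in_block ns j k)) \<longrightarrow> M $$ (i,k) = 0)"

definition block_sizes :: "nat \<Rightarrow> nat \<Rightarrow> nat list \<Rightarrow> bool" where
  "block_sizes n t ns \<longleftrightarrow> length ns = t \<and> (\<forall>j<t. ns ! j > 0) \<and> sum_list ns = n"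

end

theory Submission
  imports Defs "Jordan_Normal_Form.Determinant"
begin


definition hin :: "complex vec \<Rightarrow> complex vec \<Rightarrow> complex" where
  "hin x y = map_vec cnj x \<bullet> y"

lemma hinner_hin: "hinner = hin" unfolding hinner_def[abs_def] hin_def[abs_def] by simp

lemma hform_hin: "hform A x y = hin x (A *\<^sub>v y)" unfolding hform_def hin_def by simp

lemma vsum_Nil[simp]: "vsum n [] = 0\<^sub>v n" unfolding vsum_def by simp
lemma vsum_Cons[simp]: "vsum n (w # ws) = w + vsum n ws" unfolding vsum_def by simp

lemma vsum_carrier[simp]: "set ws \<subseteq> carrier_vec n \<Longrightarrow> vsum n ws \<in> carrier_vec n"
proof (induct ws)
  case (Cons a ws)
  thus ?case by (simp add: add_carrier_vec)
qed simp

lemma dim_vsum[simp]: "set ws \<subseteq> carrier_vec n \<Longrightarrow> dim_vec (vsum n ws) = n"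
  using vsum_carrier carrier_vecD by blast

lemma vsum_index: "set ws \<subseteq> carrier_vec n \<Longrightarrow> i < n \<Longrightarrow> vsum n ws $ i = sum_list (map (\<lambda>w. w $ i) ws)"
proof (induct ws)
  case (Cons a ws)
  hence "dim_vec (vsum n ws) = n" by simp
  thus ?case using Cons by simp
qed simp

lemma vsum_append: assumes a: "set ws \<subseteq> carrier_vec n" "set us \<subseteq> carrier_vec n"
  shows "vsum n (ws @ us) = vsum n ws + vsum n us"
proof (rule eq_vecI)
  fix i assume "i < dim_vec (vsum n ws + vsum n us)"
  hence i: "i < n" using a by simp
  have "set (ws @ us) \<subseteq> carrier_vec n" using a by simp
  then show "vsum n (ws @ us) $ i = (vsum n ws + vsum n us) $ i"
    using a i by (simp add: vsum_index)
qed (use a in simp)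

lemma vsum_concat: "\<forall>ws\<in>set wss. set ws \<subseteq> carrier_vec n \<Longrightarrow> vsum n (concat wss) = vsum n (map (vsum n) wss)"
proof (induct wss)
  case (Cons a wss)
  have "set (concat wss) \<subseteq> carrier_vec n" using Cons(2) by auto
  thus ?case using Cons by (simp add: vsum_append)
qed simp

lemma vsum_single: assumes "set ws \<subseteq> carrier_vec n" "j < length ws" "\<forall>l<length ws. l \<noteq> j \<longrightarrow> ws ! l = 0\<^sub>v n"
  shows "vsum n ws = ws ! j"
proof (rule eq_vecI)
  have wj: "ws ! j \<in> carrier_vec n" using assms nth_mem by blast
  thus "dim_vec (vsum n ws) = dim_vec (ws ! j)" using assms by simp
  fix i assume i: "i < dim_vec (ws ! j)"
  hence "i < n" using wj by simp
  hence "vsum n ws $ i = (\<Sum>l\<in>{0..<length ws}. ws ! l $ i)" using assms(1)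
    by (simp add: vsum_index sum_list_sum_nth)
  also have "\<dots> = ws ! j $ i"
  proof -
    have "(\<Sum>l\<in>{0..<length ws}. ws ! l $ i) = ws ! j $ i + (\<Sum>l\<in>{0..<length ws} - {j}. ws ! l $ i)"
      by (rule sum.remove) (use assms in auto)
    also have "(\<Sum>l\<in>{0..<length ws} - {j}. ws ! l $ i) = 0"
      by (rule sum.neutral) (use assms \<open>i<n\<close> in auto)
    finally show ?thesis by simp
  qed
  finally show "vsum n ws $ i = ws ! j $ i" .
qed

lemma mult_zero_vec[simp]: "M \<in> carrier_mat nr n \<Longrightarrow> M *\<^sub>v 0\<^sub>v n = 0\<^sub>v nr"
  by (rule eq_vecI) auto

lemma mult_vsum: fixes M :: "complex mat" assumes "M \<in> carrier_mat n n" "set ws \<subseteq> carrier_vec n"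
  shows "M *\<^sub>v vsum n ws = vsum n (map ((*\<^sub>v) M) ws)"
  using assms(2)
proof (induct ws)
  case Nil then show ?case using assms by simp
next
  case (Cons a ws)
  hence "a \<in> carrier_vec n" "vsum n ws \<in> carrier_vec n" by auto
  thus ?case using Cons assms by (simp add: mult_add_distrib_mat_vec)
qed

lemma hin_unit: "w \<in> carrier_vec n \<Longrightarrow> i < n \<Longrightarrow> hin (unit_vec n i) w = w $ i"
proof -
  assume w: "w \<in> carrier_vec n" and i: "i < n"
  have "map_vec cnj (unit_vec n i) = (unit_vec n i :: complex vec)"
    by (rule eq_vecI) (auto simp: i)
  thus ?thesis unfolding hin_def using scalar_prod_left_unit[OF w i] by simp
qed

lemma vec_eq_hin: assumes "u \<in> carrier_vec n" "w \<in> carrier_vec n" "\<And>x. x \<in> carrier_vec n \<Longrightarrow> hin x u = hin x w"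
  shows "u = w"
proof (rule eq_vecI)
  fix i assume "i < dim_vec w" hence i: "i < n" using assms by simp
  show "u $ i = w $ i" using assms(3)[of "unit_vec n i"] hin_unit[OF assms(1) i] hin_unit[OF assms(2) i] by simp
qed (use assms in simp)

lemma mult_unit_col: fixes A :: "complex mat" assumes "A \<in> carrier_mat nr n" "i < n" shows "A *\<^sub>v unit_vec n i = col A i"
proof (rule eq_vecI)
  fix r assume "r < dim_vec (col A i)" hence r: "r < nr" using assms by simp
  have "row A r \<bullet> unit_vec n i = row A r $ i" using scalar_prod_right_unit assms by blast
  thus "(A *\<^sub>v unit_vec n i) $ r = col A i $ r" using assms r by simp
qed (use assms in simp)

lemma mat_eq_vec: fixes A :: "complex mat" assumes "A \<in> carrier_mat n n" "B \<in> carrier_mat n n"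
  "\<And>v. v \<in> carrier_vec n \<Longrightarrow> A *\<^sub>v v = B *\<^sub>v v"
  shows "A = B"
proof (rule mat_col_eqI)
  fix i assume "i < dim_col B" hence i: "i < n" using assms by simp
  show "col A i = col B i" using mult_unit_col[OF assms(1) i] mult_unit_col[OF assms(2) i] assms(3)[of "unit_vec n i"] by simp
qed (use assms in auto)

lemma cadj_carrier[simp]: "A \<in> carrier_mat nr nc \<Longrightarrow> cadj A \<in> carrier_mat nc nr"
  unfolding cadj_def by auto
lemma cadj_dim[simp]: "dim_row (cadj A) = dim_col A" "dim_col (cadj A) = dim_row A"
  unfolding cadj_def by auto
lemma cadj_index[simp]: "i < dim_col A \<Longrightarrow> j < dim_row A \<Longrightarrow> cadj A $$ (i,j) = cnj (A $$ (j,i))"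
  unfolding cadj_def by auto

lemma cadj_cadj[simp]: "cadj (cadj A) = A"
  by (rule eq_matI) auto

lemma cadj_one[simp]: "cadj (1\<^sub>m n) = 1\<^sub>m n"
  by (rule eq_matI) auto

lemma cadj_mult: assumes "A \<in> carrier_mat nr n" "B \<in> carrier_mat n nc"
  shows "cadj (A * B) = cadj B * cadj A"
proof (rule eq_matI)
  fix i j assume ij: "i < dim_row (cadj B * cadj A)" "j < dim_col (cadj B * cadj A)"
  hence i: "i < nc" and j: "j < nr" using assms by auto
  have "cadj (A * B) $$ (i,j) = cnj (row A j \<bullet> col B i)" using assms i j by simp
  also have "\<dots> = (\<Sum>k<n. cnj (A $$ (j,k)) * cnj (B $$ (k,i)))"
    using assms i j unfolding scalar_prod_def by (simp add: atLeast0LessThan)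
  also have "\<dots> = row (cadj B) i \<bullet> col (cadj A) j"
    using assms i j unfolding scalar_prod_def by (auto simp: atLeast0LessThan mult.commute intro!: sum.cong)
  also have "\<dots> = (cadj B * cadj A) $$ (i,j)" using assms i j by simp
  finally show "cadj (A * B) $$ (i, j) = (cadj B * cadj A) $$ (i, j)" .
qed (use assms in auto)

lemma cnj_mult_mat_vec: assumes "M \<in> carrier_mat nr nc" "x \<in> carrier_vec nc"
  shows "map_vec cnj (M *\<^sub>v x) = map_mat cnj M *\<^sub>v map_vec cnj x"
  by (rule eq_vecI) (use assms in \<open>auto simp: scalar_prod_def\<close>)

lemma hin_adj: assumes M: "M \<in> carrier_mat nr nc" and x: "x \<in> carrier_vec nc" and y: "y \<in> carrier_vec nr"
  shows "hin (M *\<^sub>v x) y = hin x (cadj M *\<^sub>v y)"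
proof -
  let ?A = "map_mat cnj M" and ?cx = "map_vec cnj x"
  have A: "?A \<in> carrier_mat nr nc" using M by simp
  have cx: "?cx \<in> carrier_vec nc" using x by simp
  have "hin (M *\<^sub>v x) y = (?A *\<^sub>v ?cx) \<bullet> y" unfolding hin_def using cnj_mult_mat_vec[OF M x] by simp
  also have "\<dots> = y \<bullet> (?A *\<^sub>v ?cx)" by (rule comm_scalar_prod[of _ nr]) (use A cx y in auto)
  also have "\<dots> = (transpose_mat ?A *\<^sub>v y) \<bullet> ?cx" using transpose_vec_mult_scalar[OF A cx y] by simp
  also have "\<dots> = ?cx \<bullet> (transpose_mat ?A *\<^sub>v y)" by (rule comm_scalar_prod[of _ nc]) (use A cx y in auto)
  also have "transpose_mat ?A = cadj M" unfolding cadj_def by simp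
  finally show ?thesis unfolding hin_def .
qed

lemma hin_add_right: "x \<in> carrier_vec n \<Longrightarrow> y \<in> carrier_vec n \<Longrightarrow> z \<in> carrier_vec n \<Longrightarrow> hin x (y + z) = hin x y + hin x z"
  unfolding hin_def by (rule scalar_prod_add_distrib[of _ n]) auto
lemma hin_add_left: "x \<in> carrier_vec n \<Longrightarrow> y \<in> carrier_vec n \<Longrightarrow> z \<in> carrier_vec n \<Longrightarrow> hin (x + y) z = hin x z + hin y z"
  unfolding hin_def by (auto simp: scalar_prod_def sum.distrib algebra_simps)
lemma hin_smult_right: "x \<in> carrier_vec n \<Longrightarrow> y \<in> carrier_vec n \<Longrightarrow> hin x (c \<cdot>\<^sub>v y) = c * hin x y"
  unfolding hin_def by (auto simp: scalar_prod_def sum_distrib_left algebra_simps)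
lemma hin_smult_left: "x \<in> carrier_vec n \<Longrightarrow> y \<in> carrier_vec n \<Longrightarrow> hin (c \<cdot>\<^sub>v x) y = cnj c * hin x y"
  unfolding hin_def by (auto simp: scalar_prod_def sum_distrib_left algebra_simps)
lemma hin_zero_right[simp]: "x \<in> carrier_vec n \<Longrightarrow> hin x (0\<^sub>v n) = 0"
  unfolding hin_def by (auto simp: scalar_prod_def)
lemma hin_zero_left[simp]: "x \<in> carrier_vec n \<Longrightarrow> hin (0\<^sub>v n) x = 0"
  unfolding hin_def by (auto simp: scalar_prod_def)
lemma hin_cnj: "x \<in> carrier_vec n \<Longrightarrow> y \<in> carrier_vec n \<Longrightarrow> hin y x = cnj (hin x y)"
  unfolding hin_def by (auto simp: scalar_prod_def mult.commute)

lemma hin_self_eq0: assumes x: "x \<in> carrier_vec n" and h: "hin x x = 0" shows "x = 0\<^sub>v n"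
proof -
  have cn: "cnj z * z = complex_of_real ((cmod z)\<^sup>2)" for z by (metis complex_norm_square mult.commute)
  have "hin x x = (\<Sum>i<n. cnj (x $ i) * x $ i)"
    unfolding hin_def scalar_prod_def using x by (auto simp: atLeast0LessThan)
  also have "\<dots> = (\<Sum>i<n. complex_of_real ((cmod (x $ i))\<^sup>2))" by (simp only: cn)
  also have "\<dots> = complex_of_real (\<Sum>i<n. (cmod (x $ i))\<^sup>2)" by (simp only: of_real_sum)
  finally have "complex_of_real (\<Sum>i<n. (cmod (x $ i))\<^sup>2) = 0" using h by simp
  hence "(\<Sum>i<n. (cmod (x $ i))\<^sup>2) = 0" by (simp only: of_real_eq_0_iff)
  hence "\<forall>i\<in>{..<n}. (cmod (x $ i))\<^sup>2 = 0" by (subst sum_nonneg_eq_0_iff[symmetric]) auto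
  thus ?thesis using x by (intro eq_vecI) auto
qed

lemma hin_vsum_left: assumes "set ws \<subseteq> carrier_vec n" "y \<in> carrier_vec n"
  shows "hin (vsum n ws) y = sum_list (map (\<lambda>w. hin w y) ws)"
  using assms(1)
proof (induct ws)
  case (Cons a ws)
  hence "a \<in> carrier_vec n" "vsum n ws \<in> carrier_vec n" by auto
  thus ?case using Cons assms(2) by (simp add: hin_add_left)
qed (use assms in simp)

lemma hin_vsum_right: assumes "set ws \<subseteq> carrier_vec n" "y \<in> carrier_vec n"
  shows "hin y (vsum n ws) = sum_list (map (\<lambda>w. hin y w) ws)"
  using assms(1)
proof (induct ws)
  case (Cons a ws)
  hence "a \<in> carrier_vec n" "vsum n ws \<in> carrier_vec n" by auto
  thus ?case using Cons assms(2) by (simp add: hin_add_right)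
qed (use assms in simp)

lemma sum_list_single: assumes "j < length ws" "\<forall>l<length ws. l \<noteq> j \<longrightarrow> f (ws ! l) = (0::'a::comm_monoid_add)"
  shows "sum_list (map f ws) = f (ws ! j)"
proof -
  have "sum_list (map f ws) = (\<Sum>l\<in>{0..<length ws}. f (ws ! l))"
    by (simp add: sum_list_sum_nth)
  also have "\<dots> = f (ws ! j) + (\<Sum>l\<in>{0..<length ws} - {j}. f (ws ! l))"
    by (rule sum.remove) (use assms in auto)
  also have "(\<Sum>l\<in>{0..<length ws} - {j}. f (ws ! l)) = 0"
    by (rule sum.neutral) (use assms in auto)
  finally show ?thesis by simp
qed

lemma self_adjI: assumes M: "M \<in> carrier_mat n n"
  and h: "\<And>x y. x \<in> carrier_vec n \<Longrightarrow> y \<in> carrier_vec n \<Longrightarrow> hin x (M *\<^sub>v y) = hin (M *\<^sub>v x) y"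
  shows "cadj M = M"
proof (rule mat_eq_vec[of _ n])
  fix y :: "complex vec" assume y: "y \<in> carrier_vec n"
  show "cadj M *\<^sub>v y = M *\<^sub>v y"
  proof (rule vec_eq_hin[of _ n])
    fix x :: "complex vec" assume x: "x \<in> carrier_vec n"
    show "hin x (cadj M *\<^sub>v y) = hin x (M *\<^sub>v y)" using h[OF x y] hin_adj[OF M x y] by simp
  next
    have "cadj M \<in> carrier_mat n n" using M by simp
    thus "cadj M *\<^sub>v y \<in> carrier_vec n" using y by (metis mult_mat_vec_carrier)
  qed (use M y in auto)
qed (use M in auto)

lemma self_adjD: assumes M: "M \<in> carrier_mat n n" "cadj M = M" "x \<in> carrier_vec n" "y \<in> carrier_vec n"
  shows "hin (M *\<^sub>v x) y = hin x (M *\<^sub>v y)"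
  using hin_adj[OF M(1,3,4)] M(2) by simp

lemma csub_vsum: assumes "csubspace n V" "set ws \<subseteq> V" shows "vsum n ws \<in> V"
  using assms(2) by (induct ws) (use assms(1) in \<open>auto simp: csubspace_def\<close>)


definition comps :: "nat \<Rightarrow> complex vec set list \<Rightarrow> complex vec \<Rightarrow> complex vec list" where
  "comps n Vs v = (THE ws. length ws = length Vs \<and> (\<forall>j<length Vs. ws ! j \<in> Vs ! j) \<and> vsum n ws = v)"

lemma dsd_sub: "direct_sum_decomp n Vs \<Longrightarrow> j < length Vs \<Longrightarrow> csubspace n (Vs ! j)"
  unfolding direct_sum_decomp_def by auto

lemma dsd_carrier: "direct_sum_decomp n Vs \<Longrightarrow> j < length Vs \<Longrightarrow> Vs ! j \<subseteq> carrier_vec n"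
  using dsd_sub unfolding csubspace_def by blast

lemma comps_props: assumes d: "direct_sum_decomp n Vs" and v: "v \<in> carrier_vec n"
  shows "length (comps n Vs v) = length Vs" "\<forall>j<length Vs. comps n Vs v ! j \<in> Vs ! j" "vsum n (comps n Vs v) = v"
proof -
  have "\<exists>!ws. length ws = length Vs \<and> (\<forall>j<length Vs. ws ! j \<in> Vs ! j) \<and> vsum n ws = v"
    using d v unfolding direct_sum_decomp_def by blast
  from theI'[OF this] show "length (comps n Vs v) = length Vs" "\<forall>j<length Vs. comps n Vs v ! j \<in> Vs ! j" "vsum n (comps n Vs v) = v"
    unfolding comps_def by auto
qed

lemma comps_unique: assumes d: "direct_sum_decomp n Vs" and v: "v \<in> carrier_vec n"
  and ws: "length ws = length Vs" "\<forall>j<length Vs. ws ! j \<in> Vs ! j" "vsum n ws = v"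
  shows "comps n Vs v = ws"
proof -
  have "\<exists>!ws. length ws = length Vs \<and> (\<forall>j<length Vs. ws ! j \<in> Vs ! j) \<and> vsum n ws = v"
    using d v unfolding direct_sum_decomp_def by blast
  from the1_equality[OF this] show ?thesis unfolding comps_def using ws by auto
qed

lemma comps_carrier: assumes d: "direct_sum_decomp n Vs" and v: "v \<in> carrier_vec n"
  shows "set (comps n Vs v) \<subseteq> carrier_vec n"
proof
  fix w assume "w \<in> set (comps n Vs v)"
  then obtain j where j: "j < length (comps n Vs v)" "w = comps n Vs v ! j" by (auto simp: in_set_conv_nth)
  thus "w \<in> carrier_vec n" using comps_props[OF d v] dsd_carrier[OF d, of j] by auto
qed

lemma comps_member: assumes d: "direct_sum_decomp n Vs" and j: "j < length Vs" and v: "v \<in> Vs ! j"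
  shows "comps n Vs v = map (\<lambda>l. if l = j then v else 0\<^sub>v n) [0..<length Vs]"
proof -
  have vc: "v \<in> carrier_vec n" using dsd_carrier[OF d j] v by auto
  let ?ws = "map (\<lambda>l. if l = j then v else 0\<^sub>v n) [0..<length Vs]"
  show ?thesis
  proof (rule comps_unique[OF d vc])
    show "length ?ws = length Vs" by simp
    show "\<forall>l<length Vs. ?ws ! l \<in> Vs ! l" using dsd_sub[OF d] v unfolding csubspace_def by auto
    have "set ?ws \<subseteq> carrier_vec n" using vc by auto
    hence "vsum n ?ws = ?ws ! j" by (rule vsum_single) (use j in auto)
    thus "vsum n ?ws = v" using j by simp
  qed
qed

definition PE :: "nat \<Rightarrow> complex vec set list \<Rightarrow> nat \<Rightarrow> complex mat \<Rightarrow> bool" where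
  "PE n Vs j E \<longleftrightarrow> E \<in> carrier_mat n n \<and>
     (\<forall>v \<in> Vs ! j. E *\<^sub>v v = v) \<and>
     (\<forall>l<length Vs. l \<noteq> j \<longrightarrow> (\<forall>v \<in> Vs ! l. E *\<^sub>v v = 0\<^sub>v n))"

lemma PE_comps: assumes d: "direct_sum_decomp n Vs" and j: "j < length Vs" and E: "PE n Vs j E"
  and v: "v \<in> carrier_vec n"
  shows "E *\<^sub>v v = comps n Vs v ! j"
proof -
  let ?c = "comps n Vs v"
  note cp = comps_props[OF d v]
  have Ec: "E \<in> carrier_mat n n" using E unfolding PE_def by auto
  have cc: "set ?c \<subseteq> carrier_vec n" by (rule comps_carrier[OF d v])
  have "E *\<^sub>v v = E *\<^sub>v vsum n ?c" using cp by simp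
  also have "\<dots> = vsum n (map ((*\<^sub>v) E) ?c)" by (rule mult_vsum[OF Ec cc])
  also have "\<dots> = map ((*\<^sub>v) E) ?c ! j"
  proof (rule vsum_single)
    show "set (map ((*\<^sub>v) E) ?c) \<subseteq> carrier_vec n" using cc Ec by auto
    show "j < length (map ((*\<^sub>v) E) ?c)" using cp j by simp
    show "\<forall>l<length (map ((*\<^sub>v) E) ?c). l \<noteq> j \<longrightarrow> map ((*\<^sub>v) E) ?c ! l = 0\<^sub>v n"
      using E cp unfolding PE_def by auto
  qed
  also have "\<dots> = ?c ! j" using E cp j unfolding PE_def by auto
  finally show ?thesis .
qed

lemma PE_unique: assumes d: "direct_sum_decomp n Vs" and j: "j < length Vs" and "PE n Vs j E" "PE n Vs j F"
  shows "E = F"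
  using assms PE_comps[OF d j] unfolding PE_def by (intro mat_eq_vec[of _ n]) auto


lemma sum_upt_list: "sum_list (map f [0..<n]) = (\<Sum>k<n. f k)"
  by (simp add: sum_list_sum_nth atLeast0LessThan)

lemma PE_exists: assumes d: "direct_sum_decomp n Vs" and j: "j < length Vs"
  shows "\<exists>E. PE n Vs j E"
proof -
  let ?t = "length Vs"
  let ?c = "\<lambda>k. comps n Vs (unit_vec n k)"
  define M where "M = mat n n (\<lambda>(i,k). ?c k ! j $ i)"
  have cc: "\<And>k l. l < ?t \<Longrightarrow> ?c k ! l \<in> carrier_vec n"
  proof -
    fix k l assume l: "l < ?t"
    have "set (?c k) \<subseteq> carrier_vec n" by (rule comps_carrier[OF d unit_vec_carrier])
    moreover have "l < length (?c k)" using comps_props(1)[OF d unit_vec_carrier] l by simp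
    ultimately show "?c k ! l \<in> carrier_vec n" by (meson nth_mem subsetD)
  qed
  have Mv: "M *\<^sub>v v = comps n Vs v ! j" if v: "v \<in> carrier_vec n" for v
  proof -
    define ws where "ws = map (\<lambda>l. vec n (\<lambda>i. \<Sum>k<n. ?c k ! l $ i * v $ k)) [0..<?t]"
    have wsl: "ws ! l = vsum n (map (\<lambda>k. v $ k \<cdot>\<^sub>v ?c k ! l) [0..<n])" if l: "l < ?t" for l
    proof (rule eq_vecI)
      have cs: "set (map (\<lambda>k. v $ k \<cdot>\<^sub>v ?c k ! l) [0..<n]) \<subseteq> carrier_vec n" using cc l by auto
      show "dim_vec (ws ! l) = dim_vec (vsum n (map (\<lambda>k. v $ k \<cdot>\<^sub>v ?c k ! l) [0..<n]))"
        using l cs by (simp add: ws_def)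
      fix i assume "i < dim_vec (vsum n (map (\<lambda>k. v $ k \<cdot>\<^sub>v ?c k ! l) [0..<n]))"
      hence i: "i < n" using cs by simp
      show "ws ! l $ i = vsum n (map (\<lambda>k. v $ k \<cdot>\<^sub>v ?c k ! l) [0..<n]) $ i"
      proof -
        have dl: "\<And>k. dim_vec (?c k ! l) = n" using cc[OF l] by auto
        show ?thesis using dl i l by (simp add: vsum_index[OF cs i] ws_def o_def sum_upt_list mult.commute)
      qed
    qed
    have ws: "comps n Vs v = ws"
    proof (rule comps_unique[OF d v])
      show "length ws = ?t" by (simp add: ws_def)
      show "\<forall>l<?t. ws ! l \<in> Vs ! l"
      proof (intro allI impI)
        fix l assume l: "l < ?t"
        have "?c k ! l \<in> Vs ! l" for k using comps_props(2)[OF d, of "unit_vec n k"] l by simp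
        hence "vsum n (map (\<lambda>k. v $ k \<cdot>\<^sub>v ?c k ! l) [0..<n]) \<in> Vs ! l"
          using dsd_sub[OF d l] by (intro csub_vsum) (auto simp: csubspace_def)
        thus "ws ! l \<in> Vs ! l" using wsl[OF l] by simp
      qed
      show "vsum n ws = v"
      proof (rule eq_vecI)
        have wc: "set ws \<subseteq> carrier_vec n" by (auto simp: ws_def)
        thus "dim_vec (vsum n ws) = dim_vec v" using v by simp
        fix i assume "i < dim_vec v" hence i: "i < n" using v by simp
        have "vsum n ws $ i = sum_list (map (\<lambda>w. w $ i) ws)" by (rule vsum_index[OF wc i])
        also have "\<dots> = (\<Sum>l<?t. \<Sum>k<n. ?c k ! l $ i * v $ k)"
          using i by (simp add: ws_def o_def sum_upt_list)
        also have "\<dots> = (\<Sum>k<n. v $ k * (\<Sum>l<?t. ?c k ! l $ i))"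
          by (subst sum.swap) (simp add: sum_distrib_left mult.commute)
        also have "\<dots> = (\<Sum>k<n. v $ k * unit_vec n k $ i)"
        proof (rule sum.cong[OF refl])
          fix k assume k: "k \<in> {..<n}"
          have c: "set (?c k) \<subseteq> carrier_vec n" by (rule comps_carrier[OF d]) simp
          have "unit_vec n k $ i = vsum n (?c k) $ i" using comps_props(3)[OF d, of "unit_vec n k"] by simp
          also have "\<dots> = (\<Sum>l<?t. ?c k ! l $ i)"
            using comps_props(1)[OF d, of "unit_vec n k"] by (simp add: vsum_index[OF c i] sum_list_sum_nth atLeast0LessThan)
          finally show "v $ k * (\<Sum>l<?t. ?c k ! l $ i) = v $ k * unit_vec n k $ i" by simp
        qed
        also have "\<dots> = v $ i"
        proof -
          have "(\<Sum>k<n. v $ k * unit_vec n k $ i) = (\<Sum>k\<in>{..<n}. if k = i then v $ k else 0)"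
            using i by (intro sum.cong) auto
          thus ?thesis using i by simp
        qed
        finally show "vsum n ws $ i = v $ i" .
      qed
    qed
    have "M *\<^sub>v v = ws ! j"
    proof (rule eq_vecI)
      show "dim_vec (M *\<^sub>v v) = dim_vec (ws ! j)" using j by (simp add: M_def ws_def)
      fix i assume "i < dim_vec (ws ! j)" hence i: "i < n" using j by (simp add: ws_def)
      show "(M *\<^sub>v v) $ i = ws ! j $ i"
        using i j v by (simp add: M_def ws_def scalar_prod_def atLeast0LessThan row_def)
    qed
    thus ?thesis using ws by simp
  qed
  have "PE n Vs j M"
    unfolding PE_def
  proof (intro conjI ballI allI impI)
    show "M \<in> carrier_mat n n" by (simp add: M_def)
    fix v assume v: "v \<in> Vs ! j"
    have vc: "v \<in> carrier_vec n" using dsd_carrier[OF d j] v by auto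
    show "M *\<^sub>v v = v" using Mv[OF vc] comps_member[OF d j v] j by simp
  next
    fix l v assume l: "l < ?t" "l \<noteq> j" and v: "v \<in> Vs ! l"
    have vc: "v \<in> carrier_vec n" using dsd_carrier[OF d l(1)] v by auto
    show "M *\<^sub>v v = 0\<^sub>v n" using Mv[OF vc] comps_member[OF d l(1) v] j l by simp
  qed
  thus ?thesis by blast
qed

lemma proj_along_PE: assumes d: "direct_sum_decomp n Vs" and j: "j < length Vs"
  shows "PE n Vs j (proj_along n Vs j)"
proof -
  obtain E where E: "PE n Vs j E" using PE_exists[OF d j] by blast
  have eq: "proj_along n Vs j = (THE E. PE n Vs j E)" unfolding proj_along_def PE_def by simp
  have "(THE E. PE n Vs j E) = E"
  proof (rule the_equality)
    show "PE n Vs j E" by fact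
    fix F assume "PE n Vs j F" thus "F = E" using PE_unique[OF d j] E by blast
  qed
  hence "proj_along n Vs j = E" using eq by simp
  thus ?thesis using E by simp
qed

lemma proj_along_eqI: assumes d: "direct_sum_decomp n Vs" and j: "j < length Vs" and E: "PE n Vs j E"
  shows "proj_along n Vs j = E"
  using PE_unique[OF d j proj_along_PE[OF d j] E] .

lemma proj_along_comps: assumes d: "direct_sum_decomp n Vs" and j: "j < length Vs" and v: "v \<in> carrier_vec n"
  shows "proj_along n Vs j *\<^sub>v v = comps n Vs v ! j"
  by (rule PE_comps[OF d j proj_along_PE[OF d j] v])


lemma msum_Nil[simp]: "msum n [] = 0\<^sub>m n n" unfolding msum_def by simp
lemma msum_Cons[simp]: "msum n (E # es) = E + msum n es" unfolding msum_def by simp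

lemma msum_carrier[simp]: "set es \<subseteq> carrier_mat n n \<Longrightarrow> msum n es \<in> carrier_mat n n"
proof (induct es)
  case (Cons a es) thus ?case by (simp add: add_carrier_mat)
qed simp

lemma msum_mult_vec: assumes "set es \<subseteq> carrier_mat n n" "v \<in> carrier_vec n"
  shows "msum n es *\<^sub>v v = vsum n (map (\<lambda>E. E *\<^sub>v v) es)"
  using assms(1)
proof (induct es)
  case Nil thus ?case using assms(2) by (intro eq_vecI) auto
next
  case (Cons a es)
  hence "a \<in> carrier_mat n n" "msum n es \<in> carrier_mat n n" by auto
  thus ?case using Cons assms(2) by (simp add: add_mult_distrib_mat_vec)
qed

lemma zero_mat_mult_vec[simp]: "y \<in> carrier_vec n \<Longrightarrow> 0\<^sub>m nr n *\<^sub>v y = 0\<^sub>v nr"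
  by (rule eq_vecI) auto

definition fixs :: "nat \<Rightarrow> complex mat \<Rightarrow> complex vec set" where
  "fixs n E = {v \<in> carrier_vec n. E *\<^sub>v v = v}"

lemma L1: assumes d: "direct_sum_decomp n Vs" and j: "j < length Vs"
  and B: "B \<in> carrier_mat n n" "cadj B = B"
  and orth: "\<forall>j<length Vs. \<forall>l<length Vs. j \<noteq> l \<longrightarrow> (\<forall>x\<in>Vs ! j. \<forall>y\<in>Vs ! l. hin x (B *\<^sub>v y) = 0)"
  shows "cadj (B * proj_along n Vs j) = B * proj_along n Vs j"
proof -
  let ?E = "proj_along n Vs j"
  have E: "?E \<in> carrier_mat n n" using proj_along_PE[OF d j] unfolding PE_def by auto
  show ?thesis
  proof (rule self_adjI)
    show "B * ?E \<in> carrier_mat n n" using B E by simp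
    fix x y :: "complex vec" assume x: "x \<in> carrier_vec n" and y: "y \<in> carrier_vec n"
    let ?cx = "comps n Vs x" and ?cy = "comps n Vs y"
    note cx = comps_props[OF d x] and cy = comps_props[OF d y]
    have cxc: "set ?cx \<subseteq> carrier_vec n" by (rule comps_carrier[OF d x])
    have cyc: "set ?cy \<subseteq> carrier_vec n" by (rule comps_carrier[OF d y])
    have Ex: "?E *\<^sub>v x = ?cx ! j" by (rule proj_along_comps[OF d j x])
    have Ey: "?E *\<^sub>v y = ?cy ! j" by (rule proj_along_comps[OF d j y])
    have cxj: "?cx ! j \<in> carrier_vec n" using cxc cx(1) j by (metis nth_mem subsetD)
    have cyj: "?cy ! j \<in> carrier_vec n" using cyc cy(1) j by (metis nth_mem subsetD)
    have Bcyj: "B *\<^sub>v (?cy ! j) \<in> carrier_vec n" using B cyj by simp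
    have "hin x ((B * ?E) *\<^sub>v y) = hin (vsum n ?cx) (B *\<^sub>v (?cy ! j))"
      using cx(3) B E y Ey by simp
    also have "\<dots> = sum_list (map (\<lambda>w. hin w (B *\<^sub>v (?cy ! j))) ?cx)"
      by (rule hin_vsum_left[OF cxc Bcyj])
    also have "\<dots> = hin (?cx ! j) (B *\<^sub>v (?cy ! j))"
      by (rule sum_list_single) (use cx cy j orth in auto)
    finally have 1: "hin x ((B * ?E) *\<^sub>v y) = hin (?cx ! j) (B *\<^sub>v (?cy ! j))" .
    have "hin ((B * ?E) *\<^sub>v x) y = hin (B *\<^sub>v (?cx ! j)) y" using B E x Ex by simp
    also have "\<dots> = hin (?cx ! j) (B *\<^sub>v y)" by (rule self_adjD[OF B cxj y])
    also have "\<dots> = hin (?cx ! j) (vsum n (map ((*\<^sub>v) B) ?cy))" using cy(3) mult_vsum[OF B(1) cyc] by simp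
    also have "\<dots> = sum_list (map (\<lambda>w. hin (?cx ! j) w) (map ((*\<^sub>v) B) ?cy))"
      by (rule hin_vsum_right) (use cyc B cxj in auto)
    also have "\<dots> = sum_list (map (\<lambda>w. hin (?cx ! j) (B *\<^sub>v w)) ?cy)" by (simp add: o_def)
    also have "\<dots> = hin (?cx ! j) (B *\<^sub>v (?cy ! j))"
      by (rule sum_list_single) (use cx cy j orth in auto)
    finally show "hin x ((B * ?E) *\<^sub>v y) = hin ((B * ?E) *\<^sub>v x) y" using 1 by simp
  qed
qed

lemma L2: assumes B: "B \<in> carrier_mat n n" "cadj B = B"
  and Ej: "Ej \<in> carrier_mat n n" and El: "El \<in> carrier_mat n n" and c: "cadj (B * Ej) = B * Ej"
  and o: "Ej * El = 0\<^sub>m n n" and x: "x \<in> fixs n Ej" and y: "y \<in> fixs n El"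
  shows "hin x (B *\<^sub>v y) = 0"
proof -
  have xc: "x \<in> carrier_vec n" and yc: "y \<in> carrier_vec n" and ex: "Ej *\<^sub>v x = x" and ey: "El *\<^sub>v y = y"
    using x y unfolding fixs_def by auto
  have "hin x (B *\<^sub>v y) = hin (Ej *\<^sub>v x) (B *\<^sub>v (El *\<^sub>v y))" using ex ey by simp
  also have "\<dots> = hin x (cadj Ej *\<^sub>v (B *\<^sub>v (El *\<^sub>v y)))" by (rule hin_adj) (use Ej xc B El yc in auto)
  also have "cadj Ej *\<^sub>v (B *\<^sub>v (El *\<^sub>v y)) = (cadj Ej * cadj B) *\<^sub>v (El *\<^sub>v y)"
  proof -
    have "cadj Ej \<in> carrier_mat n n" using Ej by simp
    moreover have "El *\<^sub>v y \<in> carrier_vec n" using El yc by simp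
    ultimately show ?thesis using assoc_mult_mat_vec[of "cadj Ej" n n B n "El *\<^sub>v y"] B by simp
  qed
  also have "cadj Ej * cadj B = cadj (B * Ej)" using cadj_mult[of B n n Ej n] B Ej by simp
  also have "\<dots> *\<^sub>v (El *\<^sub>v y) = ((B * Ej) * El) *\<^sub>v y"
  proof -
    have "B * Ej \<in> carrier_mat n n" using B Ej by simp
    thus ?thesis using assoc_mult_mat_vec[of "B * Ej" n n El n y] El yc c by simp
  qed
  also have "(B * Ej) * El = 0\<^sub>m n n" using B Ej El o by simp
  finally show ?thesis using xc yc by simp
qed


lemma proj_map_nth[simp]: "j < length Vs \<Longrightarrow> proj_map n Vs ! j = proj_along n Vs j"
  "length (proj_map n Vs) = length Vs"
  unfolding proj_map_def by auto

lemma fixset: assumes d: "direct_sum_decomp n Vs" and j: "j < length Vs"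
  shows "Vs ! j = fixs n (proj_along n Vs j)"
proof
  show "Vs ! j \<subseteq> fixs n (proj_along n Vs j)"
    using proj_along_PE[OF d j] dsd_carrier[OF d j] unfolding PE_def fixs_def by auto
  show "fixs n (proj_along n Vs j) \<subseteq> Vs ! j"
  proof
    fix v assume "v \<in> fixs n (proj_along n Vs j)"
    hence v: "v \<in> carrier_vec n" and e: "proj_along n Vs j *\<^sub>v v = v" unfolding fixs_def by auto
    have "proj_along n Vs j *\<^sub>v v \<in> Vs ! j" using proj_along_comps[OF d j v] comps_props(2)[OF d v] j by simp
    thus "v \<in> Vs ! j" using e by simp
  qed
qed


lemma sbd_to_oi: assumes h: "\<forall>A \<in> set As. hermitian_mat n A" and s: "star_block_decomp n As t Vs"
  shows "orth_idempotents n As t (proj_map n Vs)"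
proof -
  have len: "length Vs = t" and d: "direct_sum_decomp n Vs" and nz: "\<forall>j<t. Vs ! j \<noteq> {0\<^sub>v n}"
    and orth: "\<forall>A \<in> set As. \<forall>j<t. \<forall>l<t. j \<noteq> l \<longrightarrow> (\<forall>x \<in> Vs ! j. \<forall>y \<in> Vs ! l. hform A x y = 0)"
    using s unfolding star_block_decomp_def by auto
  let ?E = "proj_along n Vs"
  have PE: "\<And>j. j < t \<Longrightarrow> PE n Vs j (?E j)" using proj_along_PE[OF d] len by simp
  have Ec: "\<And>j. j < t \<Longrightarrow> ?E j \<in> carrier_mat n n" using PE unfolding PE_def by auto
  have Ev: "\<And>j v. j < t \<Longrightarrow> v \<in> carrier_vec n \<Longrightarrow> ?E j *\<^sub>v v = comps n Vs v ! j"
    using proj_along_comps[OF d] len by simp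
  have cin: "\<And>j v. j < t \<Longrightarrow> v \<in> carrier_vec n \<Longrightarrow> comps n Vs v ! j \<in> Vs ! j"
    using comps_props(2)[OF d] len by simp
  have cc: "\<And>j v. j < t \<Longrightarrow> v \<in> carrier_vec n \<Longrightarrow> comps n Vs v ! j \<in> carrier_vec n"
    using cin dsd_carrier[OF d] len by blast
  show ?thesis unfolding orth_idempotents_def
  proof (intro conjI allI impI)
    show "length (proj_map n Vs) = t" using len by simp
  next
    fix j assume j: "j < t"
    show "proj_map n Vs ! j \<in> center n As"
      unfolding center_def
    proof (intro CollectI conjI ballI)
      show "proj_map n Vs ! j \<in> carrier_mat n n" using Ec j len by simp
      fix A assume A: "A \<in> set As"
      have Ah: "A \<in> carrier_mat n n" "cadj A = A" using h A unfolding hermitian_mat_def by auto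
      have o: "\<forall>j<length Vs. \<forall>l<length Vs. j \<noteq> l \<longrightarrow> (\<forall>x\<in>Vs ! j. \<forall>y\<in>Vs ! l. hin x (A *\<^sub>v y) = 0)"
        using orth A len unfolding hform_hin by blast
      have "cadj (A * ?E j) = A * ?E j" by (rule L1[OF d _ Ah o]) (use j len in simp)
      thus "cadj (A * proj_map n Vs ! j) = A * proj_map n Vs ! j" using j len by simp
    qed
    show "proj_map n Vs ! j \<noteq> 0\<^sub>m n n"
    proof
      assume z: "proj_map n Vs ! j = 0\<^sub>m n n"
      have sub: "csubspace n (Vs ! j)" using dsd_sub[OF d] j len by simp
      have z0: "0\<^sub>v n \<in> Vs ! j" and sc: "Vs ! j \<subseteq> carrier_vec n" using sub unfolding csubspace_def by auto
      have "Vs ! j \<noteq> {0\<^sub>v n}" using nz j by simp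
      then obtain v where v: "v \<in> Vs ! j" "v \<noteq> 0\<^sub>v n" using z0 by blast
      have vc: "v \<in> carrier_vec n" using v sc by auto
      have "?E j *\<^sub>v v = v" using PE[OF j] v unfolding PE_def by auto
      moreover have "?E j = 0\<^sub>m n n" using z j len by simp
      ultimately show False using vc v by simp
    qed
    show "proj_map n Vs ! j * proj_map n Vs ! j = proj_map n Vs ! j"
    proof -
      have "?E j * ?E j = ?E j"
      proof (rule mat_eq_vec[of _ n])
        fix v :: "complex vec" assume v: "v \<in> carrier_vec n"
        have "(?E j * ?E j) *\<^sub>v v = ?E j *\<^sub>v (comps n Vs v ! j)" using Ec[OF j] v Ev[OF j v] by simp
        also have "\<dots> = comps n Vs v ! j" using PE[OF j] cin[OF j v] unfolding PE_def by auto
        finally show "(?E j * ?E j) *\<^sub>v v = ?E j *\<^sub>v v" using Ev[OF j v] by simp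
      qed (use Ec[OF j] in auto)
      thus ?thesis using j len by simp
    qed
  next
    fix j l assume j: "j < t" and l: "l < t" and jl: "j \<noteq> l"
    have "?E j * ?E l = 0\<^sub>m n n"
    proof (rule mat_eq_vec[of _ n])
      fix v :: "complex vec" assume v: "v \<in> carrier_vec n"
      have "(?E j * ?E l) *\<^sub>v v = ?E j *\<^sub>v (comps n Vs v ! l)" using Ec[OF j] Ec[OF l] v Ev[OF l v] by simp
      also have "\<dots> = 0\<^sub>v n" using PE[OF j] cin[OF l v] l jl len unfolding PE_def by auto
      finally show "(?E j * ?E l) *\<^sub>v v = 0\<^sub>m n n *\<^sub>v v" using v by simp
    qed (use Ec[OF j] Ec[OF l] in auto)
    thus "proj_map n Vs ! j * proj_map n Vs ! l = 0\<^sub>m n n" using j l len by simp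
  next
    have sc: "set (proj_map n Vs) \<subseteq> carrier_mat n n" using Ec len unfolding proj_map_def by auto
    show "msum n (proj_map n Vs) = 1\<^sub>m n"
    proof (rule mat_eq_vec[of _ n])
      fix v :: "complex vec" assume v: "v \<in> carrier_vec n"
      have "msum n (proj_map n Vs) *\<^sub>v v = vsum n (map (\<lambda>E. E *\<^sub>v v) (proj_map n Vs))"
        by (rule msum_mult_vec[OF sc v])
      also have "map (\<lambda>E. E *\<^sub>v v) (proj_map n Vs) = comps n Vs v"
      proof (rule nth_equalityI)
        show "length (map (\<lambda>E. E *\<^sub>v v) (proj_map n Vs)) = length (comps n Vs v)"
          using comps_props(1)[OF d v] by simp
        fix i assume "i < length (map (\<lambda>E. E *\<^sub>v v) (proj_map n Vs))"
        hence i: "i < t" using len by simp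
        show "map (\<lambda>E. E *\<^sub>v v) (proj_map n Vs) ! i = comps n Vs v ! i"
          using Ev[OF i v] i len by simp
      qed
      also have "vsum n (comps n Vs v) = v" using comps_props(3)[OF d v] .
      finally show "msum n (proj_map n Vs) *\<^sub>v v = 1\<^sub>m n *\<^sub>v v" using v by simp
    qed (use sc in auto)
  qed
qed


lemma fixs_sub: assumes E: "E \<in> carrier_mat n n" shows "csubspace n (fixs n E)"
  unfolding csubspace_def fixs_def
proof (intro conjI ballI allI)
  fix x y assume x: "x \<in> {v \<in> carrier_vec n. E *\<^sub>v v = v}" and y: "y \<in> {v \<in> carrier_vec n. E *\<^sub>v v = v}"
  thus "x + y \<in> {v \<in> carrier_vec n. E *\<^sub>v v = v}" using E by (auto simp: mult_add_distrib_mat_vec)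
next
  fix c and x assume x: "x \<in> {v \<in> carrier_vec n. E *\<^sub>v v = v}"
  thus "c \<cdot>\<^sub>v x \<in> {v \<in> carrier_vec n. E *\<^sub>v v = v}" using E by (auto simp: mult_mat_vec)
qed (use E in auto)

lemma mat_nz_vec: assumes E: "(E :: complex mat) \<in> carrier_mat n n" "E \<noteq> 0\<^sub>m n n"
  shows "\<exists>v \<in> carrier_vec n. E *\<^sub>v v \<noteq> 0\<^sub>v n"
proof (rule ccontr)
  assume "\<not> ?thesis"
  hence "E = 0\<^sub>m n n" by (intro mat_eq_vec[of _ n]) (use E in auto)
  thus False using E by simp
qed

lemma oi_to_sbd: assumes h: "\<forall>A \<in> set As. hermitian_mat n A" and oi: "orth_idempotents n As t es"
  shows "star_block_decomp n As t (map (fixs n) es) \<and> proj_map n (map (fixs n) es) = es"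
proof -
  have len: "length es = t" and cen: "\<And>j. j < t \<Longrightarrow> es ! j \<in> center n As"
    and nz: "\<And>j. j < t \<Longrightarrow> es ! j \<noteq> 0\<^sub>m n n" and idem: "\<And>j. j < t \<Longrightarrow> es ! j * es ! j = es ! j"
    and ort: "\<And>j l. j < t \<Longrightarrow> l < t \<Longrightarrow> j \<noteq> l \<Longrightarrow> es ! j * es ! l = 0\<^sub>m n n"
    and ms: "msum n es = 1\<^sub>m n"
    using oi unfolding orth_idempotents_def by auto
  have ec: "\<And>j. j < t \<Longrightarrow> es ! j \<in> carrier_mat n n" using cen unfolding center_def by auto
  have sc: "set es \<subseteq> carrier_mat n n" using ec len by (auto simp: in_set_conv_nth)
  let ?Vs = "map (fixs n) es"
  have fx: "\<And>j (v :: complex vec). j < t \<Longrightarrow> v \<in> carrier_vec n \<Longrightarrow> es ! j *\<^sub>v v \<in> fixs n (es ! j)"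
  proof -
    fix j and v :: "complex vec" assume j: "j < t" and v: "v \<in> carrier_vec n"
    have "es ! j *\<^sub>v (es ! j *\<^sub>v v) = (es ! j * es ! j) *\<^sub>v v" using ec[OF j] v by simp
    thus "es ! j *\<^sub>v v \<in> fixs n (es ! j)" unfolding fixs_def using idem[OF j] ec[OF j] v by simp
  qed
  have d: "direct_sum_decomp n ?Vs"
    unfolding direct_sum_decomp_def
  proof (intro conjI ballI allI impI)
    fix j assume "j < length ?Vs" thus "csubspace n (?Vs ! j)" using fixs_sub ec len by simp
  next
    fix v :: "complex vec" assume v: "v \<in> carrier_vec n"
    let ?W = "map (\<lambda>E. E *\<^sub>v v) es"
    show "\<exists>!ws. length ws = length ?Vs \<and> (\<forall>j<length ?Vs. ws ! j \<in> ?Vs ! j) \<and> vsum n ws = v"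
    proof (rule ex1I[of _ ?W])
      show "length ?W = length ?Vs \<and> (\<forall>j<length ?Vs. ?W ! j \<in> ?Vs ! j) \<and> vsum n ?W = v"
      proof (intro conjI allI impI)
        show "length ?W = length ?Vs" by simp
        fix j assume "j < length ?Vs" thus "?W ! j \<in> ?Vs ! j" using fx v len by simp
      next
        have "vsum n ?W = msum n es *\<^sub>v v" by (rule msum_mult_vec[OF sc v, symmetric])
        thus "vsum n ?W = v" using ms v by simp
      qed
      fix ws assume ws: "length ws = length ?Vs \<and> (\<forall>j<length ?Vs. ws ! j \<in> ?Vs ! j) \<and> vsum n ws = v"
      have wl: "length ws = t" and wf: "\<And>j. j < t \<Longrightarrow> ws ! j \<in> fixs n (es ! j)" and wv: "vsum n ws = v"
        using ws len by auto
      have wc: "set ws \<subseteq> carrier_vec n" using wf wl unfolding fixs_def by (auto simp: in_set_conv_nth)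
      show "ws = ?W"
      proof (rule nth_equalityI)
        show "length ws = length ?W" using wl len by simp
        fix j assume "j < length ws" hence j: "j < t" using wl by simp
        have "es ! j *\<^sub>v v = vsum n (map ((*\<^sub>v) (es ! j)) ws)" using wv mult_vsum[OF ec[OF j] wc] by simp
        also have "\<dots> = map ((*\<^sub>v) (es ! j)) ws ! j"
        proof (rule vsum_single)
          show "set (map ((*\<^sub>v) (es ! j)) ws) \<subseteq> carrier_vec n" using wc ec[OF j] by auto
          show "j < length (map ((*\<^sub>v) (es ! j)) ws)" using j wl by simp
          show "\<forall>l<length (map ((*\<^sub>v) (es ! j)) ws). l \<noteq> j \<longrightarrow> map ((*\<^sub>v) (es ! j)) ws ! l = 0\<^sub>v n"
          proof (intro allI impI)
            fix l assume l: "l < length (map ((*\<^sub>v) (es ! j)) ws)" "l \<noteq> j"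
            hence lt: "l < t" using wl by simp
            have wlf: "ws ! l \<in> carrier_vec n" "es ! l *\<^sub>v ws ! l = ws ! l" using wf[OF lt] unfolding fixs_def by auto
            have "es ! j *\<^sub>v ws ! l = es ! j *\<^sub>v (es ! l *\<^sub>v ws ! l)" using wlf by simp
            also have "\<dots> = (es ! j * es ! l) *\<^sub>v ws ! l" using ec[OF j] ec[OF lt] wlf by simp
            also have "\<dots> = 0\<^sub>v n" using ort[OF j lt] l wlf by simp
            finally show "map ((*\<^sub>v) (es ! j)) ws ! l = 0\<^sub>v n" using l by simp
          qed
        qed
        also have "\<dots> = ws ! j" using wf[OF j] j wl unfolding fixs_def by simp
        finally show "ws ! j = ?W ! j" using j len by simp
      qed
    qed
  qed
  have sbd: "star_block_decomp n As t ?Vs"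
    unfolding star_block_decomp_def
  proof (intro conjI allI impI ballI)
    show "length ?Vs = t" using len by simp
    show "direct_sum_decomp n ?Vs" by fact
  next
    fix j assume j: "j < t"
    obtain v where v: "v \<in> carrier_vec n" "es ! j *\<^sub>v v \<noteq> 0\<^sub>v n" using mat_nz_vec[OF ec[OF j] nz[OF j]] by blast
    have "es ! j *\<^sub>v v \<in> ?Vs ! j" using fx[OF j v(1)] j len by simp
    thus "?Vs ! j \<noteq> {0\<^sub>v n}" using v(2) by blast
  next
    fix A j l x y assume A: "A \<in> set As" and j: "j < t" and l: "l < t" and jl: "j \<noteq> l"
      and x: "x \<in> ?Vs ! j" and y: "y \<in> ?Vs ! l"
    have Ah: "A \<in> carrier_mat n n" "cadj A = A" using h A unfolding hermitian_mat_def by auto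
    have c: "cadj (A * es ! j) = A * es ! j" using cen[OF j] A unfolding center_def by auto
    show "hform A x y = 0" unfolding hform_hin
      by (rule L2[OF Ah ec[OF j] ec[OF l] c ort[OF j l jl]]) (use x y j l len in auto)
  qed
  have "proj_map n ?Vs = es"
  proof (rule nth_equalityI)
    show "length (proj_map n ?Vs) = length es" by simp
    fix j assume "j < length (proj_map n ?Vs)" hence j: "j < t" using len by simp
    have "PE n ?Vs j (es ! j)"
      unfolding PE_def
    proof (intro conjI ballI allI impI)
      show "es ! j \<in> carrier_mat n n" using ec[OF j] .
      fix v assume "v \<in> ?Vs ! j" thus "es ! j *\<^sub>v v = v" using j len unfolding fixs_def by auto
    next
      fix l v assume l: "l < length ?Vs" "l \<noteq> j" and v: "v \<in> ?Vs ! l"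
      hence lt: "l < t" using len by simp
      have vv: "v \<in> carrier_vec n" "es ! l *\<^sub>v v = v" using v lt len unfolding fixs_def by auto
      have "es ! j *\<^sub>v v = es ! j *\<^sub>v (es ! l *\<^sub>v v)" using vv by simp
      also have "\<dots> = (es ! j * es ! l) *\<^sub>v v" using ec[OF j] ec[OF lt] vv by simp
      also have "\<dots> = 0\<^sub>v n" using ort[OF j lt] l vv by simp
      finally show "es ! j *\<^sub>v v = 0\<^sub>v n" .
    qed
    moreover have "j < length ?Vs" using j len by simp
    ultimately have "proj_along n ?Vs j = es ! j" using proj_along_eqI[OF d] by blast
    thus "proj_map n ?Vs ! j = es ! j" using j len by simp
  qed
  thus ?thesis using sbd by simp
qed


lemma bij_restrict: assumes "bij_betw f {x. S x} {y. T y}" "\<And>x. S x \<Longrightarrow> P x \<longleftrightarrow> Q (f x)"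
  shows "bij_betw f {x. S x \<and> P x} {y. T y \<and> Q y}"
proof -
  have inj: "inj_on f {x. S x}" and im: "f ` {x. S x} = {y. T y}" using assms(1) unfolding bij_betw_def by auto
  have "inj_on f {x. S x \<and> P x}" using inj by (rule inj_on_subset) auto
  moreover have "f ` {x. S x \<and> P x} = {y. T y \<and> Q y}"
  proof
    show "f ` {x. S x \<and> P x} \<subseteq> {y. T y \<and> Q y}" using im assms(2) by auto
    show "{y. T y \<and> Q y} \<subseteq> f ` {x. S x \<and> P x}"
    proof
      fix y assume y: "y \<in> {y. T y \<and> Q y}"
      then obtain x where "S x" "y = f x" using im by (metis (mono_tags, lifting) imageE mem_Collect_eq)
      thus "y \<in> f ` {x. S x \<and> P x}" using y assms(2) by auto
    qed
  qed
  ultimately show ?thesis unfolding bij_betw_def by simp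
qed

lemma bij_a: assumes h: "\<forall>A \<in> set As. hermitian_mat n A"
  shows "bij_betw (proj_map n) {Vs. star_block_decomp n As t Vs} {es. orth_idempotents n As t es}"
  unfolding bij_betw_def
proof
  show "inj_on (proj_map n) {Vs. star_block_decomp n As t Vs}"
  proof (rule inj_onI)
    fix Vs Ws assume V: "Vs \<in> {Vs. star_block_decomp n As t Vs}" and W: "Ws \<in> {Vs. star_block_decomp n As t Vs}"
      and eq: "proj_map n Vs = proj_map n Ws"
    have lV: "length Vs = t" and dV: "direct_sum_decomp n Vs" using V unfolding star_block_decomp_def by auto
    have lW: "length Ws = t" and dW: "direct_sum_decomp n Ws" using W unfolding star_block_decomp_def by auto
    show "Vs = Ws"
    proof (rule nth_equalityI)
      show "length Vs = length Ws" using lV lW by simp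
      fix j assume j: "j < length Vs"
      have "proj_map n Vs ! j = proj_map n Ws ! j" using eq by simp
      hence "proj_along n Vs j = proj_along n Ws j" using j lV lW by simp
      thus "Vs ! j = Ws ! j" using fixset[OF dV j] fixset[OF dW] j lV lW by simp
    qed
  qed
  show "proj_map n ` {Vs. star_block_decomp n As t Vs} = {es. orth_idempotents n As t es}"
  proof
    show "proj_map n ` {Vs. star_block_decomp n As t Vs} \<subseteq> {es. orth_idempotents n As t es}"
      using sbd_to_oi[OF h] by auto
    show "{es. orth_idempotents n As t es} \<subseteq> proj_map n ` {Vs. star_block_decomp n As t Vs}"
    proof
      fix es assume "es \<in> {es. orth_idempotents n As t es}"
      hence "star_block_decomp n As t (map (fixs n) es) \<and> proj_map n (map (fixs n) es) = es"
        using oi_to_sbd[OF h] by auto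
      thus "es \<in> proj_map n ` {Vs. star_block_decomp n As t Vs}" by (metis (mono_tags, lifting) image_eqI mem_Collect_eq)
    qed
  qed
qed

lemma herm_equiv: assumes h: "\<forall>A \<in> set As. hermitian_mat n A" and s: "star_block_decomp n As t Vs"
  shows "pairwise_orth Vs \<longleftrightarrow> (\<forall>j<t. hermitian_mat n (proj_map n Vs ! j))"
proof -
  have len: "length Vs = t" and d: "direct_sum_decomp n Vs" using s unfolding star_block_decomp_def by auto
  have oi: "orth_idempotents n As t (proj_map n Vs)" by (rule sbd_to_oi[OF h s])
  have Ec: "\<And>j. j < t \<Longrightarrow> proj_along n Vs j \<in> carrier_mat n n"
    using proj_along_PE[OF d] len unfolding PE_def by auto
  have I: "1\<^sub>m n \<in> carrier_mat n n" "cadj (1\<^sub>m n) = 1\<^sub>m n" by auto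
  show ?thesis
  proof
    assume po: "pairwise_orth Vs"
    have o: "\<forall>j<length Vs. \<forall>l<length Vs. j \<noteq> l \<longrightarrow> (\<forall>x\<in>Vs ! j. \<forall>y\<in>Vs ! l. hin x (1\<^sub>m n *\<^sub>v y) = 0)"
    proof (intro allI impI ballI)
      fix j l x y assume j: "j < length Vs" and l: "l < length Vs" and jl: "j \<noteq> l" and x: "x \<in> Vs ! j" and y: "y \<in> Vs ! l"
      have "y \<in> carrier_vec n" using dsd_carrier[OF d l] y by auto
      thus "hin x (1\<^sub>m n *\<^sub>v y) = 0" using po j l jl x y unfolding pairwise_orth_def hinner_hin by simp
    qed
    show "\<forall>j<t. hermitian_mat n (proj_map n Vs ! j)"
    proof (intro allI impI)
      fix j assume j: "j < t"
      have "cadj (1\<^sub>m n * proj_along n Vs j) = 1\<^sub>m n * proj_along n Vs j" by (rule L1[OF d _ I o]) (use j len in simp)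
      thus "hermitian_mat n (proj_map n Vs ! j)" using Ec[OF j] j len unfolding hermitian_mat_def by simp
    qed
  next
    assume he: "\<forall>j<t. hermitian_mat n (proj_map n Vs ! j)"
    show "pairwise_orth Vs"
      unfolding pairwise_orth_def hinner_hin
    proof (intro allI impI ballI)
      fix j l x y assume j: "j < length Vs" and l: "l < length Vs" and jl: "j \<noteq> l" and x: "x \<in> Vs ! j" and y: "y \<in> Vs ! l"
      have jt: "j < t" and lt: "l < t" using j l len by auto
      have c: "cadj (1\<^sub>m n * proj_along n Vs j) = 1\<^sub>m n * proj_along n Vs j"
      proof -
        have "1\<^sub>m n * proj_along n Vs j = proj_along n Vs j" using Ec[OF jt] by simp
        moreover have "cadj (proj_along n Vs j) = proj_along n Vs j" using he jt len unfolding hermitian_mat_def by auto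
        ultimately show ?thesis by simp
      qed
      have o: "proj_along n Vs j * proj_along n Vs l = 0\<^sub>m n n"
        using oi jt lt jl len unfolding orth_idempotents_def by auto
      have "hin x (1\<^sub>m n *\<^sub>v y) = 0"
        by (rule L2[OF I Ec[OF jt] Ec[OF lt] c o]) (use fixset[OF d j] fixset[OF d l] x y in auto)
      moreover have "y \<in> carrier_vec n" using dsd_carrier[OF d l] y by auto
      ultimately show "hin x y = 0" by simp
    qed
  qed
qed

lemma bij_b: assumes h: "\<forall>A \<in> set As. hermitian_mat n A"
  shows "bij_betw (proj_map n) {Vs. star_block_decomp n As t Vs \<and> pairwise_orth Vs}
         {es. orth_idempotents n As t es \<and> (\<forall>j<t. hermitian_mat n (es ! j))}"
  by (rule bij_restrict[OF bij_a[OF h]]) (rule herm_equiv[OF h])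


lemma in_block_Cons0: "in_block (a # ns) 0 i \<longleftrightarrow> i < a"
  unfolding in_block_def by simp
lemma in_block_ConsS: "in_block (a # ns) (Suc j) i \<longleftrightarrow> a \<le> i \<and> in_block ns j (i - a)"
  unfolding in_block_def by auto

lemma block_exists: "i < sum_list ns \<Longrightarrow> \<exists>j<length ns. in_block ns j i"
proof (induct ns arbitrary: i)
  case (Cons a ns)
  show ?case
  proof (cases "i < a")
    case True thus ?thesis using in_block_Cons0 by (metis length_Cons zero_less_Suc)
  next
    case False
    hence "i - a < sum_list ns" using Cons(2) by simp
    then obtain j where "j < length ns" "in_block ns j (i - a)" using Cons(1) by blast
    thus ?thesis using False in_block_ConsS by (metis Suc_less_eq length_Cons not_less)
  qed
qed simp

lemma sum_take_mono: "a \<le> b \<Longrightarrow> sum_list (take a (ns :: nat list)) \<le> sum_list (take b ns)"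
proof -
  assume "a \<le> b"
  then obtain c where "b = a + c" using le_Suc_ex by blast
  thus ?thesis by (simp add: take_add)
qed

lemma block_unique: assumes "in_block ns j i" "in_block ns j' i" shows "j = j'"
proof (rule ccontr)
  assume "j \<noteq> j'"
  hence "Suc j \<le> j' \<or> Suc j' \<le> j" by auto
  thus False
  proof
    assume "Suc j \<le> j'"
    hence "sum_list (take (Suc j) ns) \<le> sum_list (take j' ns)" by (rule sum_take_mono)
    thus False using assms unfolding in_block_def by auto
  next
    assume "Suc j' \<le> j"
    hence "sum_list (take (Suc j') ns) \<le> sum_list (take j ns)" by (rule sum_take_mono)
    thus False using assms unfolding in_block_def by auto
  qed
qed

lemma block_start: assumes bs: "block_sizes n t ns" and j: "j < t"
  shows "in_block ns j (sum_list (take j ns))" "sum_list (take j ns) < n"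
proof -
  have len: "length ns = t" and pos: "ns ! j > 0" and sm: "sum_list ns = n" using bs j unfolding block_sizes_def by auto
  have "sum_list (take (Suc j) ns) = sum_list (take j ns) + ns ! j" using j len by (simp add: take_Suc_conv_app_nth)
  thus "in_block ns j (sum_list (take j ns))" using pos unfolding in_block_def by simp
  have "sum_list (take (Suc j) ns) \<le> sum_list (take t ns)" using j by (intro sum_take_mono) simp
  thus "sum_list (take j ns) < n" using \<open>sum_list (take (Suc j) ns) = _\<close> pos len sm by simp
qed

definition Dm :: "nat \<Rightarrow> nat list \<Rightarrow> nat \<Rightarrow> complex mat" where
  "Dm n ns j = mat_diag n (\<lambda>i. if in_block ns j i then 1 else 0)"

lemma Dm_carrier[simp]: "Dm n ns j \<in> carrier_mat n n" unfolding Dm_def by simp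

lemma Dm_idem: "Dm n ns j * Dm n ns j = Dm n ns j" unfolding Dm_def mat_diag_diag
  by (rule arg_cong[where f="mat_diag n"]) auto

lemma Dm_orth: "j \<noteq> l \<Longrightarrow> Dm n ns j * Dm n ns l = 0\<^sub>m n n"
  unfolding Dm_def mat_diag_diag by (rule eq_matI) (auto simp: mat_diag_def dest: block_unique)

lemma Dm_cadj: "cadj (Dm n ns j) = Dm n ns j"
  unfolding Dm_def by (rule eq_matI) (auto simp: mat_diag_def)

lemma msum_diag: "msum n (map (\<lambda>j. mat_diag n (f j)) xs) = mat_diag n (\<lambda>i. \<Sum>j\<leftarrow>xs. f j i)"
proof (induct xs)
  case Nil thus ?case by (rule eq_matI) (auto simp: mat_diag_def)
next
  case (Cons a xs) thus ?case by simp (rule eq_matI; auto simp: mat_diag_def)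
qed

lemma Dm_sum: assumes bs: "block_sizes n t ns" shows "msum n (map (Dm n ns) [0..<t]) = 1\<^sub>m n"
proof -
  have len: "length ns = t" and sm: "sum_list ns = n" using bs unfolding block_sizes_def by auto
  have "msum n (map (Dm n ns) [0..<t]) = mat_diag n (\<lambda>i. \<Sum>j\<leftarrow>[0..<t]. if in_block ns j i then 1 else 0)"
    unfolding Dm_def by (rule msum_diag)
  also have "\<dots> = 1\<^sub>m n"
  proof (rule eq_matI)
    fix i k assume i: "i < dim_row (1\<^sub>m n :: complex mat)" and k: "k < dim_col (1\<^sub>m n :: complex mat)"
    hence i: "i < n" and k: "k < n" by auto
    obtain j where j: "j < t" "in_block ns j i" using block_exists[of i ns] i sm len by auto
    have "(\<Sum>j\<leftarrow>[0..<t]. if in_block ns j i then 1 else (0::complex)) = (\<Sum>l<t. if in_block ns l i then 1 else (0::complex))"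
      by (simp add: sum_upt_list)
    also have "\<dots> = (\<Sum>l<t. if l = j then 1 else 0)"
      by (rule sum.cong) (use j block_unique in auto)
    also have "\<dots> = 1" using j by simp
    finally show "mat_diag n (\<lambda>i. \<Sum>j\<leftarrow>[0..<t]. if in_block ns j i then 1 else (0::complex)) $$ (i, k) = 1\<^sub>m n $$ (i, k)"
      using i k by (auto simp: mat_diag_def)
  qed (auto simp: mat_diag_def)
  finally show ?thesis .
qed

lemma Dm_nz: assumes bs: "block_sizes n t ns" and j: "j < t" shows "Dm n ns j \<noteq> 0\<^sub>m n n"
proof
  assume z: "Dm n ns j = 0\<^sub>m n n"
  let ?i = "sum_list (take j ns)"
  have "Dm n ns j $$ (?i, ?i) = 1" using block_start[OF bs j] unfolding Dm_def mat_diag_def by simp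
  thus False using z block_start[OF bs j] by simp
qed

lemma Dm_comm: assumes B: "block_diag n ns B" shows "B * Dm n ns j = Dm n ns j * B"
proof -
  have Bc: "B \<in> carrier_mat n n" using B unfolding block_diag_def by auto
  show ?thesis unfolding Dm_def
  proof (subst mat_diag_mult_left[OF Bc], subst mat_diag_mult_right[OF Bc], rule eq_matI)
    fix i k assume "i < dim_row (Matrix.mat n n (\<lambda>(i, j'). (if in_block ns j i then 1 else 0) * B $$ (i, j')))"
      "k < dim_col (Matrix.mat n n (\<lambda>(i, j'). (if in_block ns j i then 1 else 0) * B $$ (i, j')))"
    hence i: "i < n" and k: "k < n" by auto
    show "Matrix.mat n n (\<lambda>(i, j'). B $$ (i, j') * (if in_block ns j j' then 1 else 0)) $$ (i, k) =
          Matrix.mat n n (\<lambda>(i, j'). (if in_block ns j i then 1 else 0) * B $$ (i, j')) $$ (i, k)"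
    proof (cases "B $$ (i,k) = 0")
      case True thus ?thesis using i k by simp
    next
      case False
      then obtain j' where "in_block ns j' i" "in_block ns j' k" using B i k unfolding block_diag_def by blast
      hence "in_block ns j i \<longleftrightarrow> in_block ns j k" using block_unique by metis
      thus ?thesis using i k by simp
    qed
  qed auto
qed


lemma cadj_mult3: assumes "X \<in> carrier_mat n n" "Y \<in> carrier_mat n n" "Z \<in> carrier_mat n n"
  shows "cadj (X * Y * Z) = cadj Z * cadj Y * cadj X"
proof -
  have "cadj (X * Y * Z) = cadj Z * cadj (X * Y)" using cadj_mult[of "X * Y" n n Z n] assms by simp
  also have "cadj (X * Y) = cadj Y * cadj X" using cadj_mult[of X n n Y n] assms by simp
  finally show ?thesis using assms by (simp add: assoc_mult_mat[of _ n n _ n _ n])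
qed

lemma fwd: assumes h: "\<forall>A \<in> set As. hermitian_mat n A"
  and P: "P \<in> carrier_mat n n" and Qi: "Qi \<in> carrier_mat n n"
  and PQi: "P * Qi = 1\<^sub>m n" and QiP: "Qi * P = 1\<^sub>m n"
  and bs: "block_sizes n t ns" and bd: "\<forall>A \<in> set As. block_diag n ns (cadj P * A * P)"
  shows "orth_idempotents n As t (map (\<lambda>j. P * Dm n ns j * Qi) [0..<t])"
proof -
  let ?E = "\<lambda>j. P * Dm n ns j * Qi"
  have mc: "\<And>A B. A \<in> carrier_mat n n \<Longrightarrow> B \<in> carrier_mat n n \<Longrightarrow> A * B \<in> carrier_mat n n" by simp
  have assoc: "\<And>A B C. A \<in> carrier_mat n n \<Longrightarrow> B \<in> carrier_mat n n \<Longrightarrow> C \<in> carrier_mat n n \<Longrightarrow> A * B * C = A * (B * C)" by simp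
  have Dc: "\<And>j. Dm n ns j \<in> carrier_mat n n" by simp
  have cP: "cadj P \<in> carrier_mat n n" "cadj Qi \<in> carrier_mat n n" using P Qi by auto
  have h1: "\<And>X. X \<in> carrier_mat n n \<Longrightarrow> Qi * (P * X) = X"
  proof -
    fix X :: "complex mat" assume X: "X \<in> carrier_mat n n"
    have "Qi * (P * X) = (Qi * P) * X" using P Qi X by simp
    thus "Qi * (P * X) = X" using QiP X by simp
  qed
  have h2: "\<And>X. X \<in> carrier_mat n n \<Longrightarrow> cadj Qi * (cadj P * X) = X"
  proof -
    fix X :: "complex mat" assume X: "X \<in> carrier_mat n n"
    have "cadj Qi * (cadj P * X) = (cadj Qi * cadj P) * X" using cP X by simp
    also have "cadj Qi * cadj P = cadj (P * Qi)" using cadj_mult[OF P Qi] by simp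
    finally show "cadj Qi * (cadj P * X) = X" using PQi X by simp
  qed
  have Ec: "\<And>j. ?E j \<in> carrier_mat n n" using P Qi by (simp add: mc Dc)
  have prod: "\<And>j l. ?E j * ?E l = P * (Dm n ns j * Dm n ns l) * Qi"
    using P Qi by (simp add: h1 mc assoc Dc)
  show ?thesis unfolding orth_idempotents_def
  proof (intro conjI allI impI)
    show "length (map ?E [0..<t]) = t" by (simp add: mc assoc Dc cP)
  next
    fix j assume j: "j < t"
    show "map ?E [0..<t] ! j \<in> center n As"
      unfolding center_def
    proof (intro CollectI conjI ballI)
      show "map ?E [0..<t] ! j \<in> carrier_mat n n" using j Ec by (simp add: mc assoc Dc cP)
      fix A assume A: "A \<in> set As"
      have Ac: "A \<in> carrier_mat n n" and Ah: "cadj A = A" using h A unfolding hermitian_mat_def by auto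
      define B where "B = cadj P * A * P"
      have Bc: "B \<in> carrier_mat n n" using P Ac cP unfolding B_def by (simp add: mc assoc Dc cP)
      have Bh: "cadj B = B" unfolding B_def using cadj_mult3[of "cadj P" n A P] P Ac Ah cP by (simp add: mc assoc Dc cP)
      have bdB: "block_diag n ns B" using bd A unfolding B_def by (simp add: mc assoc Dc cP)
      let ?D = "Dm n ns j"
      have Aeq: "A = cadj Qi * B * Qi" unfolding B_def using P Qi Ac PQi by (simp add: h2 mc assoc Dc cP)
      have AE: "A * ?E j = cadj Qi * (B * ?D) * Qi"
        by (subst Aeq) (use P Qi Bc in \<open>simp add: h1 mc assoc Dc cP\<close>)
      have "cadj (cadj Qi * (B * ?D) * Qi) = cadj Qi * cadj (B * ?D) * cadj (cadj Qi)"
        by (rule cadj_mult3) (use Qi Bc in auto)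
      also have "cadj (B * ?D) = cadj ?D * cadj B" by (rule cadj_mult[OF Bc Dc])
      also have "\<dots> = ?D * B" using Bh Dm_cadj by (simp add: mc assoc Dc cP)
      also have "\<dots> = B * ?D" using Dm_comm[OF bdB] by (simp add: mc assoc Dc cP)
      finally have "cadj (cadj Qi * (B * ?D) * Qi) = cadj Qi * (B * ?D) * Qi" by (simp add: mc assoc Dc cP)
      thus "cadj (A * map ?E [0..<t] ! j) = A * map ?E [0..<t] ! j" using AE j by (simp add: mc assoc Dc cP)
    qed
    show "map ?E [0..<t] ! j \<noteq> 0\<^sub>m n n"
    proof
      assume "map ?E [0..<t] ! j = 0\<^sub>m n n"
      hence z: "?E j = 0\<^sub>m n n" using j by (simp add: mc assoc Dc cP)
      have "Qi * ?E j * P = Dm n ns j" using P Qi by (simp add: h1 QiP mc assoc Dc cP right_mult_one_mat[OF Dc])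
      hence "Dm n ns j = 0\<^sub>m n n" using z P Qi by (simp add: mc assoc Dc cP)
      thus False using Dm_nz[OF bs j] by (simp add: mc assoc Dc cP)
    qed
    show "map ?E [0..<t] ! j * map ?E [0..<t] ! j = map ?E [0..<t] ! j"
    proof -
      have "?E j * ?E j = P * (Dm n ns j * Dm n ns j) * Qi" by (rule prod)
      also have "Dm n ns j * Dm n ns j = Dm n ns j" by (rule Dm_idem)
      finally show ?thesis using j by simp
    qed
  next
    fix j l assume j: "j < t" and l: "l < t" and jl: "j \<noteq> l"
    show "map ?E [0..<t] ! j * map ?E [0..<t] ! l = 0\<^sub>m n n"
    proof -
      have "?E j * ?E l = P * (Dm n ns j * Dm n ns l) * Qi" by (rule prod)
      also have "Dm n ns j * Dm n ns l = 0\<^sub>m n n" by (rule Dm_orth[OF jl])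
      also have "P * 0\<^sub>m n n * Qi = 0\<^sub>m n n" using P Qi by simp
      finally show ?thesis using j l by simp
    qed
  next
    have "msum n (map ?E [0..<t]) = P * msum n (map (Dm n ns) [0..<t]) * Qi"
    proof -
      have "\<And>xs. msum n (map ?E xs) = P * msum n (map (Dm n ns) xs) * Qi"
      proof -
        fix xs show "msum n (map ?E xs) = P * msum n (map (Dm n ns) xs) * Qi"
        proof (induct xs)
          case Nil thus ?case using P Qi by (simp add: mc assoc Dc cP)
        next
          case (Cons a xs)
          have msc: "msum n (map (Dm n ns) xs) \<in> carrier_mat n n" by (rule msum_carrier) auto
          have "P * (Dm n ns a + msum n (map (Dm n ns) xs)) = P * Dm n ns a + P * msum n (map (Dm n ns) xs)"
            by (rule mult_add_distrib_mat[OF P Dc msc])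
          hence "P * (Dm n ns a + msum n (map (Dm n ns) xs)) * Qi = (P * Dm n ns a + P * msum n (map (Dm n ns) xs)) * Qi"
            by simp
          also have "\<dots> = P * Dm n ns a * Qi + P * msum n (map (Dm n ns) xs) * Qi"
            by (rule add_mult_distrib_mat[OF _ _ Qi]) (use P msc in \<open>auto intro: mc\<close>)
          finally show ?case using Cons by simp
        qed
      qed
      thus ?thesis .
    qed
    thus "msum n (map ?E [0..<t]) = 1\<^sub>m n" using Dm_sum[OF bs] P Qi PQi by (simp add: mc assoc Dc cP)
  qed
qed


fun spn :: "nat \<Rightarrow> complex vec list \<Rightarrow> complex vec set" where
  "spn n [] = {0\<^sub>v n}"
| "spn n (q # qs) = {c \<cdot>\<^sub>v q + x | c x. x \<in> spn n qs}"

lemma spn_carrier: "set qs \<subseteq> carrier_vec n \<Longrightarrow> spn n qs \<subseteq> carrier_vec n"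
  by (induct qs) auto

lemma spn_sub: "set qs \<subseteq> carrier_vec n \<Longrightarrow> csubspace n (spn n qs)"
proof (induct qs)
  case Nil thus ?case unfolding csubspace_def by auto
next
  case (Cons q qs)
  have q: "q \<in> carrier_vec n" and qs: "set qs \<subseteq> carrier_vec n" using Cons(2) by auto
  have IH: "csubspace n (spn n qs)" using Cons(1) qs by simp
  have sc: "spn n qs \<subseteq> carrier_vec n" using spn_carrier[OF qs] .
  show ?case unfolding csubspace_def
  proof (intro conjI ballI allI)
    show "spn n (q # qs) \<subseteq> carrier_vec n" using q sc by auto
    have "0\<^sub>v n = 0 \<cdot>\<^sub>v q + 0\<^sub>v n" using q by (intro eq_vecI) auto
    moreover have "0\<^sub>v n \<in> spn n qs" using IH unfolding csubspace_def by auto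
    ultimately show "0\<^sub>v n \<in> spn n (q # qs)" by auto
  next
    fix x y assume "x \<in> spn n (q # qs)" "y \<in> spn n (q # qs)"
    then obtain a b u v where x: "x = a \<cdot>\<^sub>v q + u" "u \<in> spn n qs" and y: "y = b \<cdot>\<^sub>v q + v" "v \<in> spn n qs" by auto
    have uc: "u \<in> carrier_vec n" "v \<in> carrier_vec n" using x y sc by auto
    have "x + y = (a + b) \<cdot>\<^sub>v q + (u + v)" using x y q uc by (intro eq_vecI) (auto simp: algebra_simps)
    moreover have "u + v \<in> spn n qs" using IH x y unfolding csubspace_def by auto
    ultimately show "x + y \<in> spn n (q # qs)" by auto
  next
    fix c x assume "x \<in> spn n (q # qs)"
    then obtain a u where x: "x = a \<cdot>\<^sub>v q + u" "u \<in> spn n qs" by auto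
    have uc: "u \<in> carrier_vec n" using x sc by auto
    have "c \<cdot>\<^sub>v x = (c * a) \<cdot>\<^sub>v q + c \<cdot>\<^sub>v u" using x q uc by (intro eq_vecI) (auto simp: algebra_simps)
    moreover have "c \<cdot>\<^sub>v u \<in> spn n qs" using IH x unfolding csubspace_def by auto
    ultimately show "c \<cdot>\<^sub>v x \<in> spn n (q # qs)" by auto
  qed
qed

lemma spn_mem: "set qs \<subseteq> carrier_vec n \<Longrightarrow> set qs \<subseteq> spn n qs"
proof (induct qs)
  case (Cons q qs)
  have q: "q \<in> carrier_vec n" and qs: "set qs \<subseteq> carrier_vec n" using Cons(2) by auto
  have z: "0\<^sub>v n \<in> spn n qs" using spn_sub[OF qs] unfolding csubspace_def by auto
  have "q = 1 \<cdot>\<^sub>v q + 0\<^sub>v n" using q by (intro eq_vecI) auto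
  hence "q \<in> spn n (q # qs)" using z by (simp only: spn.simps) blast
  moreover have "x \<in> spn n (q # qs)" if x: "x \<in> set qs" for x
  proof -
    have "x \<in> spn n qs" using Cons(1) qs x by auto
    moreover have "x = 0 \<cdot>\<^sub>v q + x" using q x qs by (intro eq_vecI) auto
    ultimately show ?thesis by (simp only: spn.simps) blast
  qed
  ultimately show ?case by auto
qed simp

lemma spn_least: assumes V: "csubspace n V" shows "set qs \<subseteq> V \<Longrightarrow> spn n qs \<subseteq> V"
proof (induct qs)
  case Nil thus ?case using V unfolding csubspace_def by auto
next
  case (Cons q qs)
  show ?case
  proof
    fix x assume "x \<in> spn n (q # qs)"
    then obtain a u where x: "x = a \<cdot>\<^sub>v q + u" "u \<in> spn n qs" by auto
    have "u \<in> V" using Cons x by auto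
    moreover have "a \<cdot>\<^sub>v q \<in> V" using Cons(2) V unfolding csubspace_def by auto
    ultimately show "x \<in> V" using x V unfolding csubspace_def by auto
  qed
qed

fun onl :: "complex vec list \<Rightarrow> bool" where
  "onl [] = True"
| "onl (q # qs) = (hin q q = 1 \<and> (\<forall>q' \<in> set qs. hin q q' = 0) \<and> onl qs)"

lemma orth_spn: assumes qs: "set qs \<subseteq> carrier_vec n" and q: "q \<in> carrier_vec n"
  and o: "\<forall>q'\<in>set qs. hin q q' = 0"
  shows "x \<in> spn n qs \<Longrightarrow> hin q x = 0"
proof -
  have "csubspace n {x \<in> carrier_vec n. hin q x = 0}"
    unfolding csubspace_def using q by (auto simp: hin_add_right hin_smult_right)
  hence "spn n qs \<subseteq> {x \<in> carrier_vec n. hin q x = 0}" by (rule spn_least) (use qs o in auto)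
  thus "x \<in> spn n qs \<Longrightarrow> hin q x = 0" by auto
qed

definition pexp :: "nat \<Rightarrow> complex vec list \<Rightarrow> complex vec \<Rightarrow> complex vec" where
  "pexp n qs w = vsum n (map (\<lambda>q. hin q w \<cdot>\<^sub>v q) qs)"

lemma pexp_Cons: "pexp n (q # qs) w = hin q w \<cdot>\<^sub>v q + pexp n qs w" unfolding pexp_def by simp

lemma pexp_carrier: "set qs \<subseteq> carrier_vec n \<Longrightarrow> pexp n qs w \<in> carrier_vec n"
  unfolding pexp_def by (rule vsum_carrier) auto

lemma pexp_spn: "set qs \<subseteq> carrier_vec n \<Longrightarrow> pexp n qs w \<in> spn n qs"
  unfolding pexp_def
proof (induct qs)
  case Nil thus ?case by simp
next
  case (Cons q qs) thus ?case by auto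
qed

lemma hin_pexp: assumes qs: "set qs \<subseteq> carrier_vec n" and o: "onl qs" and w: "w \<in> carrier_vec n"
  shows "q' \<in> set qs \<Longrightarrow> hin q' (pexp n qs w) = hin q' w"
  using qs o
proof (induct qs)
  case Nil thus ?case by simp
next
  case (Cons q qs)
  have q: "q \<in> carrier_vec n" and qsc: "set qs \<subseteq> carrier_vec n" using Cons(3) by auto
  have q'c: "q' \<in> carrier_vec n" using Cons(2,3) by auto
  have oq: "hin q q = 1" "\<forall>q'\<in>set qs. hin q q' = 0" "onl qs" using Cons(4) by auto
  have pc: "pexp n qs w \<in> carrier_vec n" by (rule pexp_carrier[OF qsc])
  have "hin q' (pexp n (q # qs) w) = hin q w * hin q' q + hin q' (pexp n qs w)"
    unfolding pexp_Cons using q q'c pc by (simp add: hin_add_right[of _ n] hin_smult_right[of _ n])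
  show ?case
  proof (cases "q' \<in> set qs")
    case True
    have "hin q' q = cnj (hin q q')" using hin_cnj[OF q q'c] .
    hence "hin q' q = 0" using oq True by simp
    thus ?thesis using \<open>hin q' (pexp n (q # qs) w) = _\<close> Cons(1)[OF True qsc oq(3)] by simp
  next
    case False
    hence qq: "q' = q" using Cons(2) by simp
    have "hin q (pexp n qs w) = 0" by (rule orth_spn[OF qsc q oq(2) pexp_spn[OF qsc]])
    thus ?thesis using \<open>hin q' (pexp n (q # qs) w) = _\<close> qq oq by simp
  qed
qed

lemma expansion: assumes qs: "set qs \<subseteq> carrier_vec n" and o: "onl qs" and w: "w \<in> spn n qs"
  shows "pexp n qs w = w"
  using qs o w
proof (induct qs arbitrary: w)
  case Nil thus ?case by (simp add: pexp_def)
next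
  case (Cons q qs)
  have q: "q \<in> carrier_vec n" and qsc: "set qs \<subseteq> carrier_vec n" using Cons(2) by auto
  have oq: "hin q q = 1" "\<forall>q'\<in>set qs. hin q q' = 0" "onl qs" using Cons(3) by auto
  obtain c x where w: "w = c \<cdot>\<^sub>v q + x" and x: "x \<in> spn n qs" using Cons(4) by auto
  have xc: "x \<in> carrier_vec n" using spn_carrier[OF qsc] x by auto
  have hqx: "hin q x = 0" by (rule orth_spn[OF qsc q oq(2) x])
  have "hin q w = c" unfolding w using q xc hqx oq by (simp add: hin_add_right[of _ n] hin_smult_right[of _ n])
  moreover have "pexp n qs w = pexp n qs x"
  proof -
    have "\<forall>q'\<in>set qs. hin q' w = hin q' x"
    proof
      fix q' assume q': "q' \<in> set qs"
      hence q'c: "q' \<in> carrier_vec n" using qsc by auto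
      have "hin q' q = cnj (hin q q')" using hin_cnj[OF q q'c] .
      hence "hin q' q = 0" using oq q' by simp
      thus "hin q' w = hin q' x" unfolding w using q xc q'c by (simp add: hin_add_right[of _ n] hin_smult_right[of _ n])
    qed
    thus ?thesis unfolding pexp_def by (metis (no_types, lifting) map_eq_conv)
  qed
  moreover have "pexp n qs x = x" using Cons(1)[OF qsc oq(3) x] .
  ultimately show ?case unfolding pexp_Cons w by simp
qed


lemma spn_eqI: assumes "set qs \<subseteq> carrier_vec n" "set ws \<subseteq> carrier_vec n"
  "set qs \<subseteq> spn n ws" "set ws \<subseteq> spn n qs" shows "spn n qs = spn n ws"
  using spn_least[OF spn_sub[OF assms(2)] assms(3)] spn_least[OF spn_sub[OF assms(1)] assms(4)] by auto

lemma hin_self_real: assumes x: "x \<in> carrier_vec n"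
  shows "hin x x = complex_of_real (\<Sum>i<n. (cmod (x $ i))\<^sup>2)"
proof -
  have cn: "cnj z * z = complex_of_real ((cmod z)\<^sup>2)" for z by (metis complex_norm_square mult.commute)
  have "hin x x = (\<Sum>i<n. cnj (x $ i) * x $ i)"
    unfolding hin_def scalar_prod_def using x by (auto simp: atLeast0LessThan)
  also have "\<dots> = (\<Sum>i<n. complex_of_real ((cmod (x $ i))\<^sup>2))" by (simp only: cn)
  also have "\<dots> = complex_of_real (\<Sum>i<n. (cmod (x $ i))\<^sup>2)" by (simp only: of_real_sum)
  finally show ?thesis .
qed

lemma GS: "set ws \<subseteq> carrier_vec n \<Longrightarrow> \<exists>qs. set qs \<subseteq> carrier_vec n \<and> onl qs \<and> spn n qs = spn n ws"
proof (induct ws)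
  case Nil thus ?case by (intro exI[of _ "[]"]) simp
next
  case (Cons w ws)
  have w: "w \<in> carrier_vec n" and wsc: "set ws \<subseteq> carrier_vec n" using Cons(2) by auto
  obtain qs where qs: "set qs \<subseteq> carrier_vec n" and o: "onl qs" and sp: "spn n qs = spn n ws" using Cons(1) wsc by blast
  let ?p = "pexp n qs w"
  have pc: "?p \<in> carrier_vec n" by (rule pexp_carrier[OF qs])
  have pspn: "?p \<in> spn n qs" by (rule pexp_spn[OF qs])
  define r where "r = w - ?p"
  have rc: "r \<in> carrier_vec n" unfolding r_def using w pc by simp
  have wr: "w = r + ?p" unfolding r_def using w pc by (intro eq_vecI) auto
  have hr: "\<forall>q'\<in>set qs. hin q' r = 0"
  proof
    fix q' assume q': "q' \<in> set qs"
    hence q'c: "q' \<in> carrier_vec n" using qs by auto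
    have "hin q' w = hin q' r + hin q' ?p" unfolding wr[symmetric] using wr q'c rc pc
      by (metis hin_add_right)
    thus "hin q' r = 0" using hin_pexp[OF qs o w q'] by simp
  qed
  have sub_w: "spn n ws \<subseteq> spn n (w # ws)"
    by (rule spn_least[OF spn_sub]) (use Cons(2) spn_mem[OF Cons(2)] in auto)
  have w_in: "w \<in> spn n (w # ws)" using spn_mem[OF Cons(2)] by auto
  show ?case
  proof (cases "r = 0\<^sub>v n")
    case True
    hence wp: "w = ?p" using wr pc by simp
    show ?thesis
    proof (intro exI[of _ qs] conjI)
      show "set qs \<subseteq> carrier_vec n" "onl qs" by fact+
      show "spn n qs = spn n (w # ws)"
      proof (rule spn_eqI[OF qs Cons(2)])
        show "set qs \<subseteq> spn n (w # ws)" using spn_mem[OF qs] sp sub_w by auto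
        show "set (w # ws) \<subseteq> spn n qs" using wp pspn spn_mem[OF wsc] sp by auto
      qed
    qed
  next
    case False
    define a where "a = (\<Sum>i<n. (cmod (r $ i))\<^sup>2)"
    have ha: "hin r r = complex_of_real a" unfolding a_def by (rule hin_self_real[OF rc])
    have "hin r r \<noteq> 0" using hin_self_eq0[OF rc] False by auto
    hence a0: "a \<noteq> 0" using ha by simp
    have "a \<ge> 0" unfolding a_def by (intro sum_nonneg) auto
    hence apos: "a > 0" using a0 by simp
    define c where "c = complex_of_real (1 / sqrt a)"
    define q0 where "q0 = c \<cdot>\<^sub>v r"
    have q0c: "q0 \<in> carrier_vec n" unfolding q0_def using rc by simp
    have "hin q0 q0 = cnj c * c * hin r r" unfolding q0_def using rc
      by (simp add: hin_smult_left[of _ n] hin_smult_right[of _ n])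
    also have "\<dots> = complex_of_real (1 / sqrt a * (1 / sqrt a) * a)" unfolding c_def ha by (simp only: complex_cnj_complex_of_real of_real_mult)
    also have "1 / sqrt a * (1 / sqrt a) * a = 1" using apos by (simp add: field_simps)
    finally have q0n: "hin q0 q0 = 1" by simp
    have q0o: "\<forall>q'\<in>set qs. hin q0 q' = 0"
    proof
      fix q' assume q': "q' \<in> set qs"
      hence q'c: "q' \<in> carrier_vec n" using qs by auto
      have "hin q0 q' = cnj c * hin r q'" unfolding q0_def using rc q'c by (simp add: hin_smult_left[of _ n])
      also have "hin r q' = cnj (hin q' r)" by (rule hin_cnj[OF q'c rc])
      finally show "hin q0 q' = 0" using hr q' by simp
    qed
    show ?thesis
    proof (intro exI[of _ "q0 # qs"] conjI)
      show "set (q0 # qs) \<subseteq> carrier_vec n" using q0c qs by simp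
      show "onl (q0 # qs)" using q0n q0o o by simp
      show "spn n (q0 # qs) = spn n (w # ws)"
      proof (rule spn_eqI)
        show "set (q0 # qs) \<subseteq> carrier_vec n" using q0c qs by simp
        show "set (w # ws) \<subseteq> carrier_vec n" by fact
        have sub: "csubspace n (spn n (w # ws))" by (rule spn_sub[OF Cons(2)])
        have pin: "?p \<in> spn n (w # ws)" using pspn sp sub_w by auto
        have "r = w + (-1) \<cdot>\<^sub>v ?p" unfolding r_def using w pc by (intro eq_vecI) auto
        hence "r \<in> spn n (w # ws)" using sub w_in pin unfolding csubspace_def by metis
        hence "q0 \<in> spn n (w # ws)" unfolding q0_def using sub unfolding csubspace_def by auto
        moreover have "set qs \<subseteq> spn n (w # ws)" using spn_mem[OF qs] sp sub_w by auto
        ultimately show "set (q0 # qs) \<subseteq> spn n (w # ws)" by simp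
        have "w = complex_of_real (sqrt a) \<cdot>\<^sub>v q0 + ?p"
        proof -
          have "complex_of_real (sqrt a) * c = 1" unfolding c_def using apos
            by (simp flip: of_real_mult)
          hence "complex_of_real (sqrt a) \<cdot>\<^sub>v q0 = r" unfolding q0_def using rc
            by (simp add: smult_smult_assoc)
          thus ?thesis using wr by simp
        qed
        hence "w \<in> spn n (q0 # qs)" using pspn by (simp only: spn.simps) blast
        moreover have "set ws \<subseteq> spn n (q0 # qs)"
        proof -
          have "spn n qs \<subseteq> spn n (q0 # qs)"
            by (rule spn_least[OF spn_sub]) (use q0c qs spn_mem[of "q0 # qs" n] in auto)
          thus ?thesis using spn_mem[OF wsc] sp by auto
        qed
        ultimately show "set (w # ws) \<subseteq> spn n (q0 # qs)" by simp
      qed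
    qed
  qed
qed


lemma mult_vec_cols: assumes M: "(M :: complex mat) \<in> carrier_mat n k" and v: "v \<in> carrier_vec k"
  shows "M *\<^sub>v v = vsum n (map (\<lambda>i. v $ i \<cdot>\<^sub>v col M i) [0..<k])"
proof (rule eq_vecI)
  have sc: "set (map (\<lambda>i. v $ i \<cdot>\<^sub>v col M i) [0..<k]) \<subseteq> carrier_vec n" using M by auto
  show "dim_vec (M *\<^sub>v v) = dim_vec (vsum n (map (\<lambda>i. v $ i \<cdot>\<^sub>v col M i) [0..<k]))" using M sc by simp
  fix r assume "r < dim_vec (vsum n (map (\<lambda>i. v $ i \<cdot>\<^sub>v col M i) [0..<k]))"
  hence r: "r < n" using sc by simp
  have "vsum n (map (\<lambda>i. v $ i \<cdot>\<^sub>v col M i) [0..<k]) $ r = (\<Sum>i<k. v $ i * M $$ (r, i))"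
    using M r by (simp add: vsum_index[OF sc r] o_def sum_upt_list)
  also have "\<dots> = (M *\<^sub>v v) $ r" using M v r by (simp add: scalar_prod_def atLeast0LessThan mult.commute)
  finally show "(M *\<^sub>v v) $ r = vsum n (map (\<lambda>i. v $ i \<cdot>\<^sub>v col M i) [0..<k]) $ r" by simp
qed

lemma spn_cols: assumes E: "E \<in> carrier_mat n n" and idem: "E * E = E"
  shows "spn n (cols E) = fixs n E"
proof
  have cc: "set (cols E) \<subseteq> carrier_vec n" using E cols_dim by (metis carrier_matD(1))
  show "spn n (cols E) \<subseteq> fixs n E"
  proof (rule spn_least[OF fixs_sub[OF E]])
    show "set (cols E) \<subseteq> fixs n E"
    proof
      fix c assume "c \<in> set (cols E)"
      then obtain k where k: "k < n" "c = col E k" using E unfolding cols_def by auto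
      have "E *\<^sub>v c = E *\<^sub>v (E *\<^sub>v unit_vec n k)" using mult_unit_col[OF E k(1)] k by simp
      also have "\<dots> = (E * E) *\<^sub>v unit_vec n k" using E by simp
      also have "\<dots> = c" using idem mult_unit_col[OF E k(1)] k by simp
      finally show "c \<in> fixs n E" unfolding fixs_def using k E by simp
    qed
  qed
  show "fixs n E \<subseteq> spn n (cols E)"
  proof
    fix v assume "v \<in> fixs n E"
    hence v: "v \<in> carrier_vec n" "E *\<^sub>v v = v" unfolding fixs_def by auto
    have "E *\<^sub>v v = vsum n (map (\<lambda>i. v $ i \<cdot>\<^sub>v col E i) [0..<n])" by (rule mult_vec_cols[OF E v(1)])
    also have "\<dots> \<in> spn n (cols E)"
    proof (rule csub_vsum[OF spn_sub[OF cc]])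
      show "set (map (\<lambda>i. v $ i \<cdot>\<^sub>v col E i) [0..<n]) \<subseteq> spn n (cols E)"
      proof
        fix x assume "x \<in> set (map (\<lambda>i. v $ i \<cdot>\<^sub>v col E i) [0..<n])"
        then obtain i where i: "i < n" "x = v $ i \<cdot>\<^sub>v col E i" by auto
        have "col E i \<in> set (cols E)" using E i unfolding cols_def by auto
        hence "col E i \<in> spn n (cols E)" using spn_mem[OF cc] by auto
        thus "x \<in> spn n (cols E)" using i spn_sub[OF cc] unfolding csubspace_def by auto
      qed
    qed
    finally show "v \<in> spn n (cols E)" using v by simp
  qed
qed

lemma block_bases: assumes oi: "orth_idempotents n As t es"
  shows "\<exists>Qs. length Qs = t \<and> (\<forall>j<t. set (Qs ! j) \<subseteq> carrier_vec n \<and> onl (Qs ! j) \<and> spn n (Qs ! j) = fixs n (es ! j))"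
proof -
  have ex: "\<exists>qs. set qs \<subseteq> carrier_vec n \<and> onl qs \<and> spn n qs = fixs n (es ! j)" if j: "j < t" for j
  proof -
    have ec: "es ! j \<in> carrier_mat n n" and idem: "es ! j * es ! j = es ! j"
      using oi j unfolding orth_idempotents_def center_def by auto
    have cc: "set (cols (es ! j)) \<subseteq> carrier_vec n" using ec cols_dim by (metis carrier_matD(1))
    obtain qs where "set qs \<subseteq> carrier_vec n" "onl qs" "spn n qs = spn n (cols (es ! j))" using GS[OF cc] by blast
    thus ?thesis using spn_cols[OF ec idem] by auto
  qed
  define Qs where "Qs = map (\<lambda>j. SOME qs. set qs \<subseteq> carrier_vec n \<and> onl qs \<and> spn n qs = fixs n (es ! j)) [0..<t]"
  have "\<forall>j<t. set (Qs ! j) \<subseteq> carrier_vec n \<and> onl (Qs ! j) \<and> spn n (Qs ! j) = fixs n (es ! j)"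
  proof (intro allI impI)
    fix j assume j: "j < t"
    have "Qs ! j = (SOME qs. set qs \<subseteq> carrier_vec n \<and> onl qs \<and> spn n qs = fixs n (es ! j))"
      unfolding Qs_def using j by simp
    thus "set (Qs ! j) \<subseteq> carrier_vec n \<and> onl (Qs ! j) \<and> spn n (Qs ! j) = fixs n (es ! j)"
      using someI_ex[OF ex[OF j]] by simp
  qed
  moreover have "length Qs = t" unfolding Qs_def by simp
  ultimately show ?thesis by blast
qed


lemma map_idx: "map (\<lambda>i. f (xs ! i)) [0..<length xs] = map f xs"
  by (rule nth_equalityI) auto

lemma onl_norm: "onl qs \<Longrightarrow> q \<in> set qs \<Longrightarrow> hin q q = 1"
  by (induct qs) auto

lemma concat_index: "i < length (concat Qs) \<Longrightarrow>
  \<exists>j<length Qs. in_block (map length Qs) j i \<and> concat Qs ! i \<in> set (Qs ! j)"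
proof (induct Qs arbitrary: i)
  case Nil thus ?case by simp
next
  case (Cons Q Qs)
  show ?case
  proof (cases "i < length Q")
    case True
    hence "in_block (map length (Q # Qs)) 0 i" by (simp add: in_block_Cons0)
    moreover have "concat (Q # Qs) ! i = Q ! i" using True by (simp add: nth_append)
    ultimately show ?thesis using True by (intro exI[of _ 0]) auto
  next
    case False
    hence "i - length Q < length (concat Qs)" using Cons(2) by simp
    then obtain j where j: "j < length Qs" "in_block (map length Qs) j (i - length Q)" "concat Qs ! (i - length Q) \<in> set (Qs ! j)"
      using Cons(1) by blast
    have "in_block (map length (Q # Qs)) (Suc j) i" using j False by (simp add: in_block_ConsS)
    moreover have "concat (Q # Qs) ! i = concat Qs ! (i - length Q)" using False by (simp add: nth_append)
    ultimately show ?thesis using j by (intro exI[of _ "Suc j"]) auto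
  qed
qed

lemma trace_swap: assumes L: "(L :: complex mat) \<in> carrier_mat k n" and P: "P \<in> carrier_mat n k"
  shows "(\<Sum>i<k. (L * P) $$ (i,i)) = (\<Sum>r<n. (P * L) $$ (r,r))"
proof -
  have "(\<Sum>i<k. (L * P) $$ (i,i)) = (\<Sum>i<k. \<Sum>r<n. L $$ (i,r) * P $$ (r,i))"
    using L P by (simp add: scalar_prod_def atLeast0LessThan)
  also have "\<dots> = (\<Sum>r<n. \<Sum>i<k. P $$ (r,i) * L $$ (i,r))" by (subst sum.swap) (simp add: mult.commute)
  also have "\<dots> = (\<Sum>r<n. (P * L) $$ (r,r))"
    using L P by (simp add: scalar_prod_def atLeast0LessThan)
  finally show ?thesis .
qed

lemma cadj_entry: assumes P: "P \<in> carrier_mat n k" and A: "(A :: complex mat) \<in> carrier_mat n n" and i: "i < k" and i': "i' < k"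
  shows "(cadj P * A * P) $$ (i,i') = hin (col P i) (A *\<^sub>v col P i')"
proof -
  have cP: "cadj P \<in> carrier_mat k n" using P by simp
  have "(cadj P * A * P) = cadj P * (A * P)" by (rule assoc_mult_mat[OF cP A P])
  hence "(cadj P * A * P) $$ (i,i') = (cadj P * (A * P)) $$ (i,i')" by (simp only:)
  also have "\<dots> = row (cadj P) i \<bullet> col (A * P) i'" by (rule index_mult_mat) (use cP A P i i' in auto)
  also have "row (cadj P) i = map_vec cnj (col P i)" using P i by (intro eq_vecI) auto
  also have "col (A * P) i' = A *\<^sub>v col P i'" using A P i' by (intro eq_vecI) auto
  finally show ?thesis unfolding hin_def .
qed

lemma transpose_row: assumes E: "(E :: complex mat) \<in> carrier_mat n n" and q: "q \<in> carrier_vec n" and v: "v \<in> carrier_vec n"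
  shows "(transpose_mat E *\<^sub>v map_vec cnj q) \<bullet> v = hin q (E *\<^sub>v v)"
  unfolding hin_def by (rule transpose_vec_mult_scalar[OF E v]) (use q in simp)


lemma bwd: assumes h: "\<forall>A \<in> set As. hermitian_mat n A" and oi: "orth_idempotents n As t es"
  shows "\<exists>P ns. P \<in> carrier_mat n n \<and> invertible_mat P \<and> block_sizes n t ns \<and>
          (\<forall>A \<in> set As. block_diag n ns (cadj P * A * P)) \<and>
          ((\<forall>j<t. hermitian_mat n (es ! j)) \<longrightarrow> unitary_mat n P)"
proof -
  obtain Qs where lQ: "length Qs = t" and Qc: "\<And>j. j < t \<Longrightarrow> set (Qs ! j) \<subseteq> carrier_vec n"
    and Qo: "\<And>j. j < t \<Longrightarrow> onl (Qs ! j)" and Qs: "\<And>j. j < t \<Longrightarrow> spn n (Qs ! j) = fixs n (es ! j)"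
    using block_bases[OF oi] by blast
  have len: "length es = t" and ms: "msum n es = 1\<^sub>m n"
    and ec: "\<And>j. j < t \<Longrightarrow> es ! j \<in> carrier_mat n n"
    using oi unfolding orth_idempotents_def center_def by auto
  have sc: "set es \<subseteq> carrier_mat n n" using ec len by (auto simp: in_set_conv_nth)
  have sbd: "star_block_decomp n As t (map (fixs n) es)" using oi_to_sbd[OF h oi] by simp
  have fixq: "es ! j *\<^sub>v q = q" if j: "j < t" and q: "q \<in> set (Qs ! j)" for j q
  proof -
    have "q \<in> spn n (Qs ! j)" using spn_mem[OF Qc[OF j]] q by auto
    thus ?thesis using Qs[OF j] unfolding fixs_def by auto
  qed
  define flat where "flat = concat (map (\<lambda>j. map (\<lambda>q. (q, j)) (Qs ! j)) [0..<t])"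
  define qs where "qs = concat Qs"
  define rw where "rw = (\<lambda>(q, j). transpose_mat (es ! j) *\<^sub>v map_vec cnj q)"
  define rs where "rs = map rw flat"
  define k where "k = length flat"
  have fl_mem: "snd x < t \<and> fst x \<in> set (Qs ! snd x)" if "x \<in> set flat" for x
    using that unfolding flat_def by auto
  have qs_eq: "map fst flat = qs"
  proof -
    have "map fst flat = concat (map (\<lambda>j. Qs ! j) [0..<t])" unfolding flat_def by (simp add: map_concat o_def)
    also have "map (\<lambda>j. Qs ! j) [0..<t] = Qs" using map_idx[of "\<lambda>x. x" Qs] lQ by simp
    finally show ?thesis unfolding qs_def .
  qed
  have lqs: "length qs = k" unfolding k_def qs_eq[symmetric] by simp
  have lrs: "length rs = k" unfolding k_def rs_def by simp
  have qsc: "set qs \<subseteq> carrier_vec n" unfolding qs_eq[symmetric] using fl_mem Qc by fastforce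
  have rwc: "rw x \<in> carrier_vec n" if "x \<in> set flat" for x
  proof -
    obtain q j where xq: "x = (q, j)" by fastforce
    have j: "j < t" and q: "q \<in> set (Qs ! j)" using fl_mem[OF that] xq by auto
    have qc: "map_vec cnj q \<in> carrier_vec n" using Qc[OF j] q by auto
    have "transpose_mat (es ! j) \<in> carrier_mat n n" using ec[OF j] by simp
    thus ?thesis unfolding rw_def xq using qc by (simp add: mult_mat_vec_carrier)
  qed
  have rsc: "set rs \<subseteq> carrier_vec n" unfolding rs_def using rwc by auto
  define P where "P = mat_of_cols n qs"
  define L where "L = mat_of_rows n rs"
  have Pc: "P \<in> carrier_mat n k" unfolding P_def using lqs by auto
  have Lc: "L \<in> carrier_mat k n" unfolding L_def using lrs by auto
  have colP: "col P i = qs ! i" if "i < k" for i unfolding P_def using that lqs qsc by (simp add: nth_mem subsetD)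
  have rowL: "row L i = rs ! i" if "i < k" for i unfolding L_def using that lrs rsc by (simp add: nth_mem subsetD)
  have PL: "P * L = 1\<^sub>m n"
  proof (rule mat_eq_vec[of _ n])
    show "P * L \<in> carrier_mat n n" using Pc Lc by simp
    show "1\<^sub>m n \<in> carrier_mat n n" by simp
    fix v :: "complex vec" assume v: "v \<in> carrier_vec n"
    have Lv: "L *\<^sub>v v = vec k (\<lambda>i. rs ! i \<bullet> v)" using Lc rowL by (intro eq_vecI) auto
    have "(P * L) *\<^sub>v v = P *\<^sub>v (L *\<^sub>v v)" using Pc Lc v by simp
    also have "\<dots> = vsum n (map (\<lambda>i. (L *\<^sub>v v) $ i \<cdot>\<^sub>v col P i) [0..<k])"
      by (rule mult_vec_cols[OF Pc]) (use Lc v in simp)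
    also have "map (\<lambda>i. (L *\<^sub>v v) $ i \<cdot>\<^sub>v col P i) [0..<k] = map (\<lambda>i. (rw (flat ! i) \<bullet> v) \<cdot>\<^sub>v fst (flat ! i)) [0..<k]"
    proof (rule map_cong[OF refl])
      fix i assume "i \<in> set [0..<k]" hence i: "i < k" by simp
      have "col P i = fst (flat ! i)" using colP[OF i] qs_eq i k_def by (metis nth_map)
      moreover have "(L *\<^sub>v v) $ i = rw (flat ! i) \<bullet> v" using Lv i rs_def k_def by simp
      ultimately show "(L *\<^sub>v v) $ i \<cdot>\<^sub>v col P i = (rw (flat ! i) \<bullet> v) \<cdot>\<^sub>v fst (flat ! i)" by simp
    qed
    also have "\<dots> = map (\<lambda>x. (rw x \<bullet> v) \<cdot>\<^sub>v fst x) flat"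
      unfolding k_def by (rule map_idx)
    also have "\<dots> = concat (map (\<lambda>j. map (\<lambda>q. (rw (q, j) \<bullet> v) \<cdot>\<^sub>v q) (Qs ! j)) [0..<t])"
      unfolding flat_def by (simp add: map_concat o_def)
    also have "vsum n \<dots> = vsum n (map (\<lambda>j. vsum n (map (\<lambda>q. (rw (q, j) \<bullet> v) \<cdot>\<^sub>v q) (Qs ! j))) [0..<t])"
      by (subst vsum_concat) (use Qc in \<open>fastforce simp: o_def\<close>)+
    also have "map (\<lambda>j. vsum n (map (\<lambda>q. (rw (q, j) \<bullet> v) \<cdot>\<^sub>v q) (Qs ! j))) [0..<t] = map (\<lambda>j. es ! j *\<^sub>v v) [0..<t]"
    proof (rule map_cong[OF refl])
      fix j assume "j \<in> set [0..<t]" hence j: "j < t" by simp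
      have "map (\<lambda>q. (rw (q, j) \<bullet> v) \<cdot>\<^sub>v q) (Qs ! j) = map (\<lambda>q. hin q (es ! j *\<^sub>v v) \<cdot>\<^sub>v q) (Qs ! j)"
        using transpose_row[OF ec[OF j] _ v] Qc[OF j] unfolding rw_def by auto
      hence "vsum n (map (\<lambda>q. (rw (q, j) \<bullet> v) \<cdot>\<^sub>v q) (Qs ! j)) = pexp n (Qs ! j) (es ! j *\<^sub>v v)"
        unfolding pexp_def by (intro arg_cong[where f="vsum n"] map_cong) auto
      also have "\<dots> = es ! j *\<^sub>v v"
      proof (rule expansion[OF Qc[OF j] Qo[OF j]])
        have idj: "es ! j * es ! j = es ! j" using oi j unfolding orth_idempotents_def by auto
        have "es ! j *\<^sub>v (es ! j *\<^sub>v v) = (es ! j * es ! j) *\<^sub>v v" using ec[OF j] v by simp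
        hence "es ! j *\<^sub>v v \<in> fixs n (es ! j)" using idj ec[OF j] v unfolding fixs_def by simp
        thus "es ! j *\<^sub>v v \<in> spn n (Qs ! j)" using Qs[OF j] by simp
      qed
      finally show "vsum n (map (\<lambda>q. (rw (q, j) \<bullet> v) \<cdot>\<^sub>v q) (Qs ! j)) = es ! j *\<^sub>v v" .
    qed
    also have "map (\<lambda>j. es ! j *\<^sub>v v) [0..<t] = map (\<lambda>E. E *\<^sub>v v) es"
      using map_idx[of "\<lambda>E. E *\<^sub>v v" es] len by simp
    also have "vsum n \<dots> = msum n es *\<^sub>v v" by (rule msum_mult_vec[OF sc v, symmetric])
    finally show "(P * L) *\<^sub>v v = 1\<^sub>m n *\<^sub>v v" using ms v by simp
  qed
  have tr1: "(\<Sum>i<k. (L * P) $$ (i,i)) = of_nat k"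
  proof -
    have "(\<Sum>i<k. (L * P) $$ (i,i)) = (\<Sum>i<k. rw (flat ! i) \<bullet> fst (flat ! i))"
    proof (rule sum.cong[OF refl])
      fix i assume "i \<in> {..<k}" hence i: "i < k" by simp
      have "(L * P) $$ (i,i) = row L i \<bullet> col P i" using Lc Pc i by simp
      also have "\<dots> = rw (flat ! i) \<bullet> fst (flat ! i)"
        using rowL[OF i] colP[OF i] qs_eq i k_def rs_def by (metis nth_map)
      finally show "(L * P) $$ (i,i) = rw (flat ! i) \<bullet> fst (flat ! i)" .
    qed
    also have "\<dots> = (\<Sum>i<k. 1)"
    proof (rule sum.cong[OF refl])
      fix i assume "i \<in> {..<k}" hence i: "i < k" by simp
      obtain q j where x: "flat ! i = (q, j)" by fastforce
      have "(q, j) \<in> set flat" using x i k_def by (metis nth_mem)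
      hence j: "j < t" and q: "q \<in> set (Qs ! j)" using fl_mem by auto
      have qc: "q \<in> carrier_vec n" using Qc[OF j] q by auto
      have "rw (q, j) \<bullet> q = hin q (es ! j *\<^sub>v q)" unfolding rw_def using transpose_row[OF ec[OF j] qc qc] by simp
      also have "\<dots> = hin q q" using fixq[OF j q] by simp
      also have "\<dots> = 1" by (rule onl_norm[OF Qo[OF j] q])
      finally show "rw (flat ! i) \<bullet> fst (flat ! i) = 1" using x by simp
    qed
    finally show ?thesis by simp
  qed
  have "(\<Sum>r<n. (P * L) $$ (r,r)) = of_nat n" using PL by simp
  hence "of_nat k = (of_nat n :: complex)" using tr1 trace_swap[OF Lc Pc] by simp
  hence kn: "k = n" by simp
  have Pn: "P \<in> carrier_mat n n" and Ln: "L \<in> carrier_mat n n" using Pc Lc kn by auto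
  have LP: "L * P = 1\<^sub>m n" by (rule mat_mult_left_right_inverse[OF Pn Ln PL])
  have inv: "invertible_mat P"
    unfolding invertible_mat_def inverts_mat_def square_mat.simps using Pn Ln PL LP by auto
  define ns where "ns = map length Qs"
  have bs: "block_sizes n t ns"
    unfolding block_sizes_def
  proof (intro conjI allI impI)
    show "length ns = t" unfolding ns_def using lQ by simp
    fix j assume j: "j < t"
    have "map (fixs n) es ! j \<noteq> {0\<^sub>v n}" using sbd j unfolding star_block_decomp_def by auto
    hence "Qs ! j \<noteq> []" using Qs[OF j] j len by auto
    thus "ns ! j > 0" unfolding ns_def using j lQ by simp
  next
    show "sum_list ns = n" unfolding ns_def using lqs kn qs_def by (simp add: length_concat)
  qed
  have bd: "block_diag n ns (cadj P * A * P)" if A: "A \<in> set As" for A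
    unfolding block_diag_def
  proof (intro conjI allI impI)
    have Ac: "A \<in> carrier_mat n n" using h A unfolding hermitian_mat_def by auto
    have "cadj P \<in> carrier_mat n n" using Pn by simp
    thus "cadj P * A * P \<in> carrier_mat n n" using Pn Ac by (meson mult_carrier_mat)
    fix i i' assume i: "i < n" and i': "i' < n" and nb: "\<not> (\<exists>j<length ns. in_block ns j i \<and> in_block ns j i')"
    have il: "i < length (concat Qs)" "i' < length (concat Qs)" using i i' lqs kn qs_def by auto
    obtain j where j: "j < length Qs" "in_block ns j i" "qs ! i \<in> set (Qs ! j)"
      using concat_index[OF il(1)] unfolding ns_def qs_def by blast
    obtain j' where j': "j' < length Qs" "in_block ns j' i'" "qs ! i' \<in> set (Qs ! j')"
      using concat_index[OF il(2)] unfolding ns_def qs_def by blast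
    have jj: "j \<noteq> j'" using nb j j' unfolding ns_def by auto
    have x: "qs ! i \<in> map (fixs n) es ! j" using j Qs[of j] spn_mem[OF Qc[of j]] lQ len by auto
    have y: "qs ! i' \<in> map (fixs n) es ! j'" using j' Qs[of j'] spn_mem[OF Qc[of j']] lQ len by auto
    have "hform A (qs ! i) (qs ! i') = 0" using sbd A j j' jj x y lQ unfolding star_block_decomp_def by auto
    moreover have "(cadj P * A * P) $$ (i,i') = hin (col P i) (A *\<^sub>v col P i')"
      by (rule cadj_entry[OF Pc Ac]) (use i i' kn in auto)
    ultimately show "(cadj P * A * P) $$ (i,i') = 0" using colP i i' kn unfolding hform_hin by simp
  qed
  have un: "unitary_mat n P" if he: "\<forall>j<t. hermitian_mat n (es ! j)"
  proof -
    have "rs = map (map_vec cnj) qs"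
    proof -
      have "rs = map (\<lambda>x. map_vec cnj (fst x)) flat"
        unfolding rs_def
      proof (rule map_cong[OF refl])
        fix x assume x: "x \<in> set flat"
        obtain q j where xq: "x = (q, j)" by fastforce
        have j: "j < t" and q: "q \<in> set (Qs ! j)" using fl_mem[OF x] xq by auto
        have qc: "q \<in> carrier_vec n" using Qc[OF j] q by auto
        have eh: "cadj (es ! j) = es ! j" using he j unfolding hermitian_mat_def by auto
        have "transpose_mat (es ! j) = map_mat cnj (es ! j)"
        proof (rule eq_matI)
          fix a b assume ab: "a < dim_row (map_mat cnj (es ! j))" "b < dim_col (map_mat cnj (es ! j))"
          hence a: "a < n" and b: "b < n" using ec[OF j] by auto
          have "cadj (es ! j) $$ (a,b) = es ! j $$ (a,b)" using eh by simp
          hence "cnj (es ! j $$ (b,a)) = es ! j $$ (a,b)" using ec[OF j] a b by simp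
          hence "es ! j $$ (b,a) = cnj (es ! j $$ (a,b))" by (metis complex_cnj_cnj)
          thus "transpose_mat (es ! j) $$ (a,b) = map_mat cnj (es ! j) $$ (a,b)" using ec[OF j] a b by simp
        qed (use ec[OF j] in auto)
        hence "rw x = map_mat cnj (es ! j) *\<^sub>v map_vec cnj q" unfolding rw_def xq by simp
        also have "\<dots> = map_vec cnj (es ! j *\<^sub>v q)" using cnj_mult_mat_vec[OF ec[OF j] qc] by simp
        also have "\<dots> = map_vec cnj q" using fixq[OF j q] by simp
        finally show "rw x = map_vec cnj (fst x)" using xq by simp
      qed
      thus ?thesis using qs_eq by auto
    qed
    moreover have dq: "dim_vec (qs ! i) = n" if "i < length qs" for i
    proof -
      have "qs ! i \<in> set qs" using that by simp
      hence "qs ! i \<in> carrier_vec n" using qsc by blast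
      thus ?thesis by simp
    qed
    ultimately have "L = cadj P" unfolding L_def P_def
    proof (intro eq_matI)
      fix a b assume rs: "rs = map (map_vec cnj) qs" and a: "a < dim_row (cadj (mat_of_cols n qs))" and b: "b < dim_col (cadj (mat_of_cols n qs))"
      hence a': "a < length qs" and b': "b < n" by auto
      show "mat_of_rows n rs $$ (a, b) = cadj (mat_of_cols n qs) $$ (a, b)"
        unfolding rs using a' b' dq[OF a'] by (simp add: cadj_def mat_of_rows_def mat_of_cols_def)
    qed (auto simp: rs_def mat_of_rows_def mat_of_cols_def qs_eq[symmetric])
    thus ?thesis unfolding unitary_mat_def using Pn LP by simp
  qed
  show ?thesis using Pn inv bs bd un by blast
qed


theorem mainTheorem7:
  fixes n m t :: nat and As :: "complex mat list"
  assumes "length As = m"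
    and "\<forall>A \<in> set As. hermitian_mat n A"
    and "t \<ge> 1"
  shows
   "bij_betw (proj_map n) {Vs. star_block_decomp n As t Vs} {es. orth_idempotents n As t es}
    \<and> ((\<exists>P ns. P \<in> carrier_mat n n \<and> invertible_mat P \<and> block_sizes n t ns \<and>
          (\<forall>A \<in> set As. block_diag n ns (cadj P * A * P)))
        \<longleftrightarrow> (\<exists>es. orth_idempotents n As t es))
    \<and> bij_betw (proj_map n) {Vs. star_block_decomp n As t Vs \<and> pairwise_orth Vs}
         {es. orth_idempotents n As t es \<and> (\<forall>j<t. hermitian_mat n (es ! j))}
    \<and> ((\<exists>U ns. unitary_mat n U \<and> block_sizes n t ns \<and>
          (\<forall>A \<in> set As. block_diag n ns (cadj U * A * U)))
        \<longleftrightarrow> (\<exists>es. orth_idempotents n As t es \<and> (\<forall>j<t. hermitian_mat n (es ! j))))"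
proof (intro conjI)
  note h = assms(2)
  show "bij_betw (proj_map n) {Vs. star_block_decomp n As t Vs} {es. orth_idempotents n As t es}"
    by (rule bij_a[OF h])
  show "bij_betw (proj_map n) {Vs. star_block_decomp n As t Vs \<and> pairwise_orth Vs}
         {es. orth_idempotents n As t es \<and> (\<forall>j<t. hermitian_mat n (es ! j))}"
    by (rule bij_b[OF h])
  show "(\<exists>P ns. P \<in> carrier_mat n n \<and> invertible_mat P \<and> block_sizes n t ns \<and>
          (\<forall>A \<in> set As. block_diag n ns (cadj P * A * P)))
        \<longleftrightarrow> (\<exists>es. orth_idempotents n As t es)"
  proof
    assume "\<exists>P ns. P \<in> carrier_mat n n \<and> invertible_mat P \<and> block_sizes n t ns \<and>
          (\<forall>A \<in> set As. block_diag n ns (cadj P * A * P))"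
    then obtain P ns where P: "P \<in> carrier_mat n n" and inv: "invertible_mat P" and bs: "block_sizes n t ns"
      and bd: "\<forall>A \<in> set As. block_diag n ns (cadj P * A * P)" by blast
    obtain B where PB: "P * B = 1\<^sub>m (dim_row P)" and BP: "B * P = 1\<^sub>m (dim_row B)"
      using inv unfolding invertible_mat_def inverts_mat_def by blast
    have "dim_col B = n" using arg_cong[OF PB, of dim_col] P by simp
    moreover have "dim_row B = n" using arg_cong[OF BP, of dim_col] P by simp
    ultimately have Bc: "B \<in> carrier_mat n n" by auto
    have "orth_idempotents n As t (map (\<lambda>j. P * Dm n ns j * B) [0..<t])"
      by (rule fwd[OF h P Bc _ _ bs bd]) (use PB BP P Bc in auto)
    thus "\<exists>es. orth_idempotents n As t es" by blast
  next
    assume "\<exists>es. orth_idempotents n As t es"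
    then obtain es where "orth_idempotents n As t es" by blast
    from bwd[OF h this] show "\<exists>P ns. P \<in> carrier_mat n n \<and> invertible_mat P \<and> block_sizes n t ns \<and>
          (\<forall>A \<in> set As. block_diag n ns (cadj P * A * P))" by blast
  qed
  show "(\<exists>U ns. unitary_mat n U \<and> block_sizes n t ns \<and>
          (\<forall>A \<in> set As. block_diag n ns (cadj U * A * U)))
        \<longleftrightarrow> (\<exists>es. orth_idempotents n As t es \<and> (\<forall>j<t. hermitian_mat n (es ! j)))"
  proof
    assume "\<exists>U ns. unitary_mat n U \<and> block_sizes n t ns \<and>
          (\<forall>A \<in> set As. block_diag n ns (cadj U * A * U))"
    then obtain U ns where U: "unitary_mat n U" and bs: "block_sizes n t ns"
      and bd: "\<forall>A \<in> set As. block_diag n ns (cadj U * A * U)" by blast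
    have Uc: "U \<in> carrier_mat n n" and UU: "cadj U * U = 1\<^sub>m n" using U unfolding unitary_mat_def by auto
    have cU: "cadj U \<in> carrier_mat n n" using Uc by simp
    have UU': "U * cadj U = 1\<^sub>m n" by (rule mat_mult_left_right_inverse[OF cU Uc UU])
    let ?es = "map (\<lambda>j. U * Dm n ns j * cadj U) [0..<t]"
    have "orth_idempotents n As t ?es" by (rule fwd[OF h Uc cU UU' UU bs bd])
    moreover have "\<forall>j<t. hermitian_mat n (?es ! j)"
    proof (intro allI impI)
      fix j assume j: "j < t"
      have "cadj (U * Dm n ns j * cadj U) = cadj (cadj U) * cadj (Dm n ns j) * cadj U"
        by (rule cadj_mult3[OF Uc Dm_carrier cU])
      also have "\<dots> = U * Dm n ns j * cadj U" using Dm_cadj by simp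
      finally show "hermitian_mat n (?es ! j)" unfolding hermitian_mat_def using j Uc cU
        by (simp add: mult_carrier_mat[of _ n n _ n])
    qed
    ultimately show "\<exists>es. orth_idempotents n As t es \<and> (\<forall>j<t. hermitian_mat n (es ! j))" by blast
  next
    assume "\<exists>es. orth_idempotents n As t es \<and> (\<forall>j<t. hermitian_mat n (es ! j))"
    then obtain es where oi: "orth_idempotents n As t es" and he: "\<forall>j<t. hermitian_mat n (es ! j)" by blast
    from bwd[OF h oi] he show "\<exists>U ns. unitary_mat n U \<and> block_sizes n t ns \<and>
          (\<forall>A \<in> set As. block_diag n ns (cadj U * A * U))" by blast
  qed
qed


end
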